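(* Let $\{(\mathcal{X}_j,\mathring{\mathcal{X}}_j,p_j)\}_{j\in\mathcal{I}}$ be $B$-$B$-bimodules with specified projections with reduced free product $(\mathcal{X},\mathring{\mathcal{X}},p)$, let $i\in\mathcal{I}$, $\mathcal{A}_{i,\mathcal{F}}=\lambda_i(\mathcal{L}(\mathcal{X}_i))$, $\mathcal{A}_{i,\mathcal{B}}=P_i\lambda_i(\mathcal{L}(\mathcal{X}_i))P_i$, and $\mathcal{A}_i$ the algebra generated by $\mathcal{A}_{i,\mathcal{F}}\cup\mathcal{A}_{i,\mathcal{B}}$. If $A\in\mathcal{A}_i$ is a Boolean product of elements from $\mathcal{A}_{i,\mathcal{F}}\cup\mathcal{A}_{i,\mathcal{B}}$, then $A\in\mathcal{A}_{i,\mathcal{B}}$; in particular $A(\mathcal{X})\subset B\oplus\mathring{\mathcal{X}}_i$.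
   Context: $B$ is a unital complex algebra. A $B$-$B$-bimodule with specified projection is a triple $(\mathcal{X},\mathring{\mathcal{X}},p)$ with $\mathcal{X}=B\oplus\mathring{\mathcal{X}}$ a direct sum of $B$-$B$-bimodules and $p(b\oplus\eta)=b$; $\mathcal{L}(\mathcal{X})$ is the algebra of linear operators on $\mathcal{X}$ respecting the bimodule structure. The reduced free product is $\mathcal{X}=B\oplus\mathring{\mathcal{X}}$ with $\mathring{\mathcal{X}}=\bigoplus_{n\ge1}\bigoplus_{i_1\ne\cdots\ne i_n}\mathring{\mathcal{X}}_{i_1}\otimes_B\cdots\otimes_B\mathring{\mathcal{X}}_{i_n}$ (consecutive indices distinct). For $i\in\mathcal{I}$, $\mathcal{X}(i)=B\oplus\bigoplus_{n\ge1}\bigoplus_{i_1\ne\cdots\ne i_n,\ i_1\ne i}\mathring{\mathcal{X}}_{i_1}\otimes_B\cdots\otimes_B\mathring{\mathcal{X}}_{i_n}$, $V_i:\mathcal{X}\to\mathcal{X}_i\otimes_B\mathcal{X}(i)$ is the natural isomorphism, $\lambda_i(a)=V_i^{-1}(a\otimes I)V_i$, and $P_i$ is the projection of $\mathcal{X}$ onto the summand $B\oplus\mathring{\mathcal{X}}_i$, vanishing on the other summands. For $S_i\subset\mathcal{A}_{i,\mathcal{F}}\cup\mathcal{A}_{i,\mathcal{B}}$, a product $a_1\cdots a_m$ with all $a_k\in S_i$ is a simple product of elements from $S_i$; it is a Boolean product if $a_k\in S_i\cap\mathcal{A}_{i,\mathcal{B}}$ for some $k$. *)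

theory Defs
  imports Complex_Main "HOL-Library.FuncSet"
begin

definition calg :: "(complex \<Rightarrow> 'b::ring_1 \<Rightarrow> 'b) \<Rightarrow> bool" where
  "calg scB \<longleftrightarrow>
     (\<forall>c x y. scB c (x + y) = scB c x + scB c y) \<and>
     (\<forall>c d x. scB (c + d) x = scB c x + scB d x) \<and>
     (\<forall>c d x. scB (c * d) x = scB c (scB d x)) \<and>
     (\<forall>x. scB 1 x = x) \<and>
     (\<forall>c x y. scB c (x * y) = scB c x * y) \<and>
     (\<forall>c x y. scB c (x * y) = x * scB c y)"

record ('b, 'm) bimod =
  carr :: "'m set"
  zer  :: 'm
  ad   :: "'m \<Rightarrow> 'm \<Rightarrow> 'm"
  sc   :: "complex \<Rightarrow> 'm \<Rightarrow> 'm"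
  lac  :: "'b \<Rightarrow> 'm \<Rightarrow> 'm"
  rac  :: "'m \<Rightarrow> 'b \<Rightarrow> 'm"

definition bimodule :: "(complex \<Rightarrow> 'b::ring_1 \<Rightarrow> 'b) \<Rightarrow> ('b, 'm) bimod \<Rightarrow> bool" where
  "bimodule scB M \<longleftrightarrow>
     zer M \<in> carr M \<and>
     (\<forall>x\<in>carr M. \<forall>y\<in>carr M. ad M x y \<in> carr M) \<and>
     (\<forall>c. \<forall>x\<in>carr M. sc M c x \<in> carr M) \<and>
     (\<forall>b. \<forall>x\<in>carr M. lac M b x \<in> carr M) \<and>
     (\<forall>b. \<forall>x\<in>carr M. rac M x b \<in> carr M) \<and>
     \<comment> \<open>complex vector space\<close>
     (\<forall>x\<in>carr M. \<forall>y\<in>carr M. \<forall>z\<in>carr M. ad M (ad M x y) z = ad M x (ad M y z)) \<and>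
     (\<forall>x\<in>carr M. \<forall>y\<in>carr M. ad M x y = ad M y x) \<and>
     (\<forall>x\<in>carr M. ad M (zer M) x = x) \<and>
     (\<forall>x\<in>carr M. ad M x (sc M (-1) x) = zer M) \<and>
     (\<forall>c. \<forall>x\<in>carr M. \<forall>y\<in>carr M. sc M c (ad M x y) = ad M (sc M c x) (sc M c y)) \<and>
     (\<forall>c d. \<forall>x\<in>carr M. sc M (c + d) x = ad M (sc M c x) (sc M d x)) \<and>
     (\<forall>c d. \<forall>x\<in>carr M. sc M (c * d) x = sc M c (sc M d x)) \<and>
     (\<forall>x\<in>carr M. sc M 1 x = x) \<and>
     \<comment> \<open>left B-module\<close>
     (\<forall>b b'. \<forall>x\<in>carr M. lac M (b + b') x = ad M (lac M b x) (lac M b' x)) \<and>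
     (\<forall>b. \<forall>x\<in>carr M. \<forall>y\<in>carr M. lac M b (ad M x y) = ad M (lac M b x) (lac M b y)) \<and>
     (\<forall>b b'. \<forall>x\<in>carr M. lac M (b * b') x = lac M b (lac M b' x)) \<and>
     (\<forall>x\<in>carr M. lac M 1 x = x) \<and>
     (\<forall>c b. \<forall>x\<in>carr M. lac M (scB c b) x = sc M c (lac M b x)) \<and>
     (\<forall>c b. \<forall>x\<in>carr M. lac M b (sc M c x) = sc M c (lac M b x)) \<and>
     \<comment> \<open>right B-module\<close>
     (\<forall>b b'. \<forall>x\<in>carr M. rac M x (b + b') = ad M (rac M x b) (rac M x b')) \<and>
     (\<forall>b. \<forall>x\<in>carr M. \<forall>y\<in>carr M. rac M (ad M x y) b = ad M (rac M x b) (rac M y b)) \<and>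
     (\<forall>b b'. \<forall>x\<in>carr M. rac M x (b * b') = rac M (rac M x b) b') \<and>
     (\<forall>x\<in>carr M. rac M x 1 = x) \<and>
     (\<forall>c b. \<forall>x\<in>carr M. rac M x (scB c b) = sc M c (rac M x b)) \<and>
     (\<forall>c b. \<forall>x\<in>carr M. rac M (sc M c x) b = sc M c (rac M x b)) \<and>
     \<comment> \<open>bimodule compatibility\<close>
     (\<forall>b b'. \<forall>x\<in>carr M. lac M b (rac M x b') = rac M (lac M b x) b')"

text \<open>Given the bimodule M (playing the role of X\<ring>_j), the space X_j = B \<oplus> X\<ring>_j
is modelled by pairs (b, x); the specified projection is p(b, x) = b.\<close>

definition pcar :: "('b, 'm) bimod \<Rightarrow> ('b \<times> 'm) set" where
  "pcar M = UNIV \<times> carr M"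

definition padd :: "('b::ring_1, 'm) bimod \<Rightarrow> 'b \<times> 'm \<Rightarrow> 'b \<times> 'm \<Rightarrow> 'b \<times> 'm" where
  "padd M p q = (fst p + fst q, ad M (snd p) (snd q))"

definition psc :: "(complex \<Rightarrow> 'b \<Rightarrow> 'b) \<Rightarrow> ('b, 'm) bimod \<Rightarrow> complex \<Rightarrow> 'b \<times> 'm \<Rightarrow> 'b \<times> 'm" where
  "psc scB M c p = (scB c (fst p), sc M c (snd p))"

definition plac :: "('b::ring_1, 'm) bimod \<Rightarrow> 'b \<Rightarrow> 'b \<times> 'm \<Rightarrow> 'b \<times> 'm" where
  "plac M b p = (b * fst p, lac M b (snd p))"

definition prac :: "('b::ring_1, 'm) bimod \<Rightarrow> 'b \<times> 'm \<Rightarrow> 'b \<Rightarrow> 'b \<times> 'm" where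
  "prac M p b = (fst p * b, rac M (snd p) b)"

text \<open>\<L>(X_j): linear operators on X_j respecting the bimodule structure
(complex linear B-B-bimodule maps), as extensional functions on the carrier.\<close>

definition opL :: "(complex \<Rightarrow> 'b::ring_1 \<Rightarrow> 'b) \<Rightarrow> ('b, 'm) bimod \<Rightarrow> ('b \<times> 'm \<Rightarrow> 'b \<times> 'm) set" where
  "opL scB M = {T. T \<in> extensional (pcar M) \<and> T \<in> pcar M \<rightarrow> pcar M \<and>
     (\<forall>p\<in>pcar M. \<forall>q\<in>pcar M. T (padd M p q) = padd M (T p) (T q)) \<and>
     (\<forall>c. \<forall>p\<in>pcar M. T (psc scB M c p) = psc scB M c (T p)) \<and>
     (\<forall>b. \<forall>p\<in>pcar M. T (plac M b p) = plac M b (T p)) \<and>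
     (\<forall>b. \<forall>p\<in>pcar M. T (prac M p b) = prac M (T p) b)}"

text \<open>Elementary tensors x_1 \<otimes> ... \<otimes> x_n with x_k \<in> X\<ring>_{i_k} and i_1 \<noteq> ... \<noteq> i_n
are represented by nonempty words [(i_1,x_1),...,(i_n,x_n)].  The space
X\<ring> = (+) X\<ring>_{i_1} \<otimes>_B ... \<otimes>_B X\<ring>_{i_n} is the quotient of the free complex vector
space on such words by the subspace generated by the multilinearity and
B-balancing relations.\<close>

type_synonym ('i, 'm) word = "('i \<times> 'm) list"
type_synonym ('i, 'm) fvec = "('i, 'm) word \<Rightarrow> complex"

definition wordv :: "('i \<Rightarrow> ('b, 'm) bimod) \<Rightarrow> ('i, 'm) word \<Rightarrow> bool" where
  "wordv M w \<longleftrightarrow> w \<noteq> [] \<and>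
     (\<forall>k < length w. snd (w ! k) \<in> carr (M (fst (w ! k)))) \<and>
     (\<forall>k. Suc k < length w \<longrightarrow> fst (w ! k) \<noteq> fst (w ! Suc k))"

definition FV :: "('i \<Rightarrow> ('b, 'm) bimod) \<Rightarrow> ('i, 'm) fvec set" where
  "FV M = {f. finite {w. f w \<noteq> 0} \<and> (\<forall>w. f w \<noteq> 0 \<longrightarrow> wordv M w)}"

definition delta :: "('i, 'm) word \<Rightarrow> ('i, 'm) fvec" where
  "delta w = (\<lambda>v. if v = w then 1 else 0)"

definition fadd :: "('i, 'm) fvec \<Rightarrow> ('i, 'm) fvec \<Rightarrow> ('i, 'm) fvec" where
  "fadd f g = (\<lambda>w. f w + g w)"

definition fsc :: "complex \<Rightarrow> ('i, 'm) fvec \<Rightarrow> ('i, 'm) fvec" where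
  "fsc c f = (\<lambda>w. c * f w)"

definition Rel :: "('i \<Rightarrow> ('b, 'm) bimod) \<Rightarrow> ('i, 'm) fvec set" where
  "Rel M =
     {fadd (delta (w[k := (j, ad (M j) x y)]))
        (fsc (-1) (fadd (delta (w[k := (j, x)])) (delta (w[k := (j, y)])))) | w k j x y.
        wordv M w \<and> k < length w \<and> fst (w ! k) = j \<and> x \<in> carr (M j) \<and> y \<in> carr (M j)} \<union>
     {fadd (delta (w[k := (j, sc (M j) c x)])) (fsc (- c) (delta (w[k := (j, x)]))) | w k j x c.
        wordv M w \<and> k < length w \<and> fst (w ! k) = j \<and> x \<in> carr (M j)} \<union>
     {fadd (delta (w[k := (j, rac (M j) x b), Suc k := (j', y)]))
        (fsc (-1) (delta (w[k := (j, x), Suc k := (j', lac (M j') b y)]))) | w k j j' x y b.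
        wordv M w \<and> Suc k < length w \<and> fst (w ! k) = j \<and> fst (w ! Suc k) = j' \<and>
        x \<in> carr (M j) \<and> y \<in> carr (M j')}"

inductive_set NSp :: "('i \<Rightarrow> ('b, 'm) bimod) \<Rightarrow> ('i, 'm) fvec set" for M where
  NSp_zero: "(\<lambda>w. 0) \<in> NSp M"
| NSp_rel: "g \<in> Rel M \<Longrightarrow> g \<in> NSp M"
| NSp_add: "f \<in> NSp M \<Longrightarrow> g \<in> NSp M \<Longrightarrow> fadd f g \<in> NSp M"
| NSp_sc: "f \<in> NSp M \<Longrightarrow> fsc c f \<in> NSp M"

definition cls :: "('i \<Rightarrow> ('b, 'm) bimod) \<Rightarrow> ('i, 'm) fvec \<Rightarrow> ('i, 'm) fvec set" where
  "cls M f = {g \<in> FV M. fadd g (fsc (-1) f) \<in> NSp M}"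

definition rep :: "('i, 'm) fvec set \<Rightarrow> ('i, 'm) fvec" where
  "rep C = (SOME f. f \<in> C)"

text \<open>Carrier of X\<ring> and of X = B \<oplus> X\<ring>.\<close>
definition Xo :: "('i \<Rightarrow> ('b, 'm) bimod) \<Rightarrow> ('i, 'm) fvec set set" where
  "Xo M = cls M ` FV M"

definition Xc :: "('i \<Rightarrow> ('b, 'm) bimod) \<Rightarrow> ('b \<times> ('i, 'm) fvec set) set" where
  "Xc M = UNIV \<times> Xo M"

definition lext :: "(('i, 'm) word \<Rightarrow> ('i, 'm) fvec) \<Rightarrow> ('i, 'm) fvec \<Rightarrow> ('i, 'm) fvec" where
  "lext \<phi> f = (\<lambda>v. \<Sum>w\<in>{w. f w \<noteq> 0}. f w * \<phi> w v)"

definition wl :: "('i \<Rightarrow> ('b, 'm) bimod) \<Rightarrow> 'b \<Rightarrow> ('i, 'm) word \<Rightarrow> ('i, 'm) word" where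
  "wl M b w = (case w of [] \<Rightarrow> [] | (j, x) # r \<Rightarrow> (j, lac (M j) b x) # r)"

definition wr :: "('i \<Rightarrow> ('b, 'm) bimod) \<Rightarrow> ('i, 'm) word \<Rightarrow> 'b \<Rightarrow> ('i, 'm) word" where
  "wr M w b = (if w = [] then []
     else butlast w @ [(fst (last w), rac (M (fst (last w))) (snd (last w)) b)])"

definition xadd :: "('i \<Rightarrow> ('b::ring_1, 'm) bimod) \<Rightarrow> 'b \<times> ('i, 'm) fvec set \<Rightarrow> 'b \<times> ('i, 'm) fvec set \<Rightarrow> 'b \<times> ('i, 'm) fvec set" where
  "xadd M p q = (fst p + fst q, cls M (fadd (rep (snd p)) (rep (snd q))))"

definition xsc :: "(complex \<Rightarrow> 'b \<Rightarrow> 'b) \<Rightarrow> ('i \<Rightarrow> ('b, 'm) bimod) \<Rightarrow> complex \<Rightarrow> 'b \<times> ('i, 'm) fvec set \<Rightarrow> 'b \<times> ('i, 'm) fvec set" where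
  "xsc scB M c p = (scB c (fst p), cls M (fsc c (rep (snd p))))"

definition xlac :: "('i \<Rightarrow> ('b::ring_1, 'm) bimod) \<Rightarrow> 'b \<Rightarrow> 'b \<times> ('i, 'm) fvec set \<Rightarrow> 'b \<times> ('i, 'm) fvec set" where
  "xlac M b p = (b * fst p, cls M (lext (\<lambda>w. delta (wl M b w)) (rep (snd p))))"

definition xrac :: "('i \<Rightarrow> ('b::ring_1, 'm) bimod) \<Rightarrow> 'b \<times> ('i, 'm) fvec set \<Rightarrow> 'b \<Rightarrow> 'b \<times> ('i, 'm) fvec set" where
  "xrac M p b = (fst p * b, cls M (lext (\<lambda>w. delta (wr M w b)) (rep (snd p))))"

text \<open>The operator \<lambda>_i(a) = V_i^(-1) (a \<otimes> I) V_i, written out on the generators of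
X \<cong> X_i \<otimes>_B X(i):  b \<mapsto> a(b) \<otimes> 1;  a word not starting in i is 1 \<otimes> w;
a word x \<otimes> r starting in i is x \<otimes> r (with r = 1 if r is empty).\<close>

definition lamw :: "('i \<Rightarrow> ('b::ring_1, 'm) bimod) \<Rightarrow> 'i \<Rightarrow> ('b \<times> 'm \<Rightarrow> 'b \<times> 'm)
    \<Rightarrow> ('i, 'm) word \<Rightarrow> 'b \<times> ('i, 'm) fvec" where
  "lamw M i a w =
     (if fst (hd w) = i then
        (let (b', \<eta>) = a (0, snd (hd w)) in
          if tl w = [] then (b', delta [(i, \<eta>)])
          else (0, fadd (delta (wl M b' (tl w))) (delta ((i, \<eta>) # tl w))))
      else
        (let (b', \<eta>) = a (1, zer (M i)) in
          (0, fadd (delta (wl M b' w)) (delta ((i, \<eta>) # w)))))"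

definition lam :: "(complex \<Rightarrow> 'b::ring_1 \<Rightarrow> 'b) \<Rightarrow> ('i \<Rightarrow> ('b, 'm) bimod) \<Rightarrow> 'i \<Rightarrow> ('b \<times> 'm \<Rightarrow> 'b \<times> 'm)
    \<Rightarrow> 'b \<times> ('i, 'm) fvec set \<Rightarrow> 'b \<times> ('i, 'm) fvec set" where
  "lam scB M i a = restrict (\<lambda>(b0, C).
     (let f = rep C; (b', \<eta>) = a (b0, zer (M i)) in
       (b' + (\<Sum>w\<in>{w. f w \<noteq> 0}. scB (f w) (fst (lamw M i a w))),
        cls M (fadd (delta [(i, \<eta>)]) (\<lambda>v. \<Sum>w\<in>{w. f w \<noteq> 0}. f w * snd (lamw M i a w) v)))))
     (Xc M)"

text \<open>P_i: projection of X onto B \<oplus> X\<ring>_i, vanishing on the other summands.\<close>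
definition Pj :: "('i \<Rightarrow> ('b, 'm) bimod) \<Rightarrow> 'i \<Rightarrow> 'b \<times> ('i, 'm) fvec set \<Rightarrow> 'b \<times> ('i, 'm) fvec set" where
  "Pj M i = restrict (\<lambda>(b0, C).
     (b0, cls M (\<lambda>w. if length w = 1 \<and> fst (hd w) = i then rep C w else 0))) (Xc M)"

text \<open>The summand B \<oplus> X\<ring>_i of X.\<close>
definition Xsub :: "('i \<Rightarrow> ('b, 'm) bimod) \<Rightarrow> 'i \<Rightarrow> ('b \<times> ('i, 'm) fvec set) set" where
  "Xsub M i = {(b, cls M f) | b f. f \<in> FV M \<and>
      (\<forall>w. f w \<noteq> 0 \<longrightarrow> length w = 1 \<and> fst (hd w) = i)}"

definition AF :: "(complex \<Rightarrow> 'b::ring_1 \<Rightarrow> 'b) \<Rightarrow> ('i \<Rightarrow> ('b, 'm) bimod) \<Rightarrow> 'i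
    \<Rightarrow> ('b \<times> ('i, 'm) fvec set \<Rightarrow> 'b \<times> ('i, 'm) fvec set) set" where
  "AF scB M i = lam scB M i ` opL scB (M i)"

definition AB :: "(complex \<Rightarrow> 'b::ring_1 \<Rightarrow> 'b) \<Rightarrow> ('i \<Rightarrow> ('b, 'm) bimod) \<Rightarrow> 'i
    \<Rightarrow> ('b \<times> ('i, 'm) fvec set \<Rightarrow> 'b \<times> ('i, 'm) fvec set) set" where
  "AB scB M i = (\<lambda>a. compose (Xc M) (Pj M i) (compose (Xc M) (lam scB M i a) (Pj M i)))
                 ` opL scB (M i)"

definition oprod :: "'x set \<Rightarrow> ('x \<Rightarrow> 'x) list \<Rightarrow> 'x \<Rightarrow> 'x" where
  "oprod X as = foldr (compose X) as (restrict id X)"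

definition simple_product :: "'x set \<Rightarrow> ('x \<Rightarrow> 'x) set \<Rightarrow> ('x \<Rightarrow> 'x) \<Rightarrow> bool" where
  "simple_product X S A \<longleftrightarrow> (\<exists>as. as \<noteq> [] \<and> set as \<subseteq> S \<and> A = oprod X as)"

definition boolean_product :: "'x set \<Rightarrow> ('x \<Rightarrow> 'x) set \<Rightarrow> ('x \<Rightarrow> 'x) set \<Rightarrow> ('x \<Rightarrow> 'x) \<Rightarrow> bool" where
  "boolean_product X S SB A \<longleftrightarrow>
     (\<exists>as. as \<noteq> [] \<and> set as \<subseteq> S \<and> A = oprod X as \<and> (\<exists>a\<in>set as. a \<in> S \<inter> SB))"

end

theory Submission
  imports Defs "HOL-Library.Function_Algebras"
begin

locale fp =
  fixes scB :: "complex \<Rightarrow> 'b::ring_1 \<Rightarrow> 'b"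
    and M :: "'i \<Rightarrow> ('b, 'm) bimod"
    and i :: 'i
  assumes CA: "calg scB"
    and BM: "\<forall>j. bimodule scB (M j)"
begin

lemma scB_add: "scB c (x + y) = scB c x + scB c y"
  using CA unfolding calg_def by blast
lemma scB_addc: "scB (c + d) x = scB c x + scB d x"
  using CA unfolding calg_def by blast
lemma scB_mult: "scB (c * d) x = scB c (scB d x)"
  using CA unfolding calg_def by blast
lemma scB_one: "scB 1 x = x"
  using CA unfolding calg_def by blast
lemma scB_zero: "scB c 0 = 0"
proof -
  have "scB c (0 + 0) = scB c 0 + scB c 0" by (rule scB_add)
  then show ?thesis by simp
qed
lemma scB_zeroc: "scB 0 x = 0"
proof -
  have "scB (0 + 0) x = scB 0 x + scB 0 x" by (rule scB_addc)
  then show ?thesis by simp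
qed
lemma scB_sum: "finite S \<Longrightarrow> scB c (\<Sum>w\<in>S. f w) = (\<Sum>w\<in>S. scB c (f w))"
  by (induction S rule: finite_induct) (simp_all add: scB_zero scB_add)

lemma bm: "bimodule scB (M j)" using BM by blast

lemmas bmd = bm[unfolded bimodule_def]

lemma zer_c: "zer (M j) \<in> carr (M j)" using bmd[of j] by auto
lemma ad_c: "x \<in> carr (M j) \<Longrightarrow> y \<in> carr (M j) \<Longrightarrow> ad (M j) x y \<in> carr (M j)" using bmd[of j] by auto
lemma sc_c: "x \<in> carr (M j) \<Longrightarrow> sc (M j) c x \<in> carr (M j)" using bmd[of j] by auto
lemma lac_c: "x \<in> carr (M j) \<Longrightarrow> lac (M j) b x \<in> carr (M j)" using bmd[of j] by auto
lemma rac_c: "x \<in> carr (M j) \<Longrightarrow> rac (M j) x b \<in> carr (M j)" using bmd[of j] by auto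
lemma ad_assoc: "x \<in> carr (M j) \<Longrightarrow> y \<in> carr (M j) \<Longrightarrow> z \<in> carr (M j) \<Longrightarrow>
   ad (M j) (ad (M j) x y) z = ad (M j) x (ad (M j) y z)" using bmd[of j] by auto
lemma ad_comm: "x \<in> carr (M j) \<Longrightarrow> y \<in> carr (M j) \<Longrightarrow> ad (M j) x y = ad (M j) y x" using bmd[of j] by auto
lemma ad_zer: "x \<in> carr (M j) \<Longrightarrow> ad (M j) (zer (M j)) x = x" using bmd[of j] by auto
lemma ad_neg: "x \<in> carr (M j) \<Longrightarrow> ad (M j) x (sc (M j) (-1) x) = zer (M j)" using bmd[of j] by auto
lemma sc_ad: "x \<in> carr (M j) \<Longrightarrow> y \<in> carr (M j) \<Longrightarrow> sc (M j) c (ad (M j) x y) = ad (M j) (sc (M j) c x) (sc (M j) c y)" using bmd[of j] by auto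
lemma lac_add: "x \<in> carr (M j) \<Longrightarrow> lac (M j) (b + b') x = ad (M j) (lac (M j) b x) (lac (M j) b' x)" using bmd[of j] by auto
lemma lac_ad: "x \<in> carr (M j) \<Longrightarrow> y \<in> carr (M j) \<Longrightarrow> lac (M j) b (ad (M j) x y) = ad (M j) (lac (M j) b x) (lac (M j) b y)" using bmd[of j] by auto
lemma lac_mult: "x \<in> carr (M j) \<Longrightarrow> lac (M j) (b * b') x = lac (M j) b (lac (M j) b' x)" using bmd[of j] by auto
lemma lac_scB: "x \<in> carr (M j) \<Longrightarrow> lac (M j) (scB c b) x = sc (M j) c (lac (M j) b x)" using bmd[of j] by auto
lemma lac_sc: "x \<in> carr (M j) \<Longrightarrow> lac (M j) b (sc (M j) c x) = sc (M j) c (lac (M j) b x)" using bmd[of j] by auto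
lemma compat: "x \<in> carr (M j) \<Longrightarrow> lac (M j) b (rac (M j) x b') = rac (M j) (lac (M j) b x) b'" using bmd[of j] by auto

lemma ad_zz: "ad (M j) (zer (M j)) (zer (M j)) = zer (M j)"
  by (simp add: ad_zer zer_c)

lemma sc_zer: "sc (M j) c (zer (M j)) = zer (M j)"
proof -
  let ?z = "zer (M j)" and ?u = "sc (M j) c (zer (M j))"
  have uc: "?u \<in> carr (M j)" by (simp add: sc_c zer_c)
  have nc: "sc (M j) (-1) ?u \<in> carr (M j)" by (simp add: sc_c uc)
  have uu: "ad (M j) ?u ?u = ?u" using sc_ad[OF zer_c zer_c, of j c] ad_zz[of j] by simp
  have "?z = ad (M j) ?u (sc (M j) (-1) ?u)" by (simp add: ad_neg uc)
  also have "\<dots> = ad (M j) (ad (M j) ?u ?u) (sc (M j) (-1) ?u)" using uu by simp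
  also have "\<dots> = ad (M j) ?u (ad (M j) ?u (sc (M j) (-1) ?u))" using ad_assoc[OF uc uc nc] .
  also have "\<dots> = ad (M j) ?u ?z" by (simp add: ad_neg uc)
  also have "\<dots> = ?u" using ad_comm[OF uc zer_c] ad_zer[OF uc] by simp
  finally show ?thesis by simp
qed

end

definition spt :: "('i, 'm) fvec \<Rightarrow> ('i, 'm) word set" where
  "spt f = {w. f w \<noteq> 0}"

lemma fadd_eq: "fadd f g = f + g" by (simp add: fadd_def fun_eq_iff)

lemma NSp_plus: "f \<in> NSp M \<Longrightarrow> g \<in> NSp M \<Longrightarrow> f + g \<in> NSp M"
  using NSp_add[of f M g] by (simp add: fadd_eq)
lemma NSp_fsc': "f \<in> NSp M \<Longrightarrow> fsc c f \<in> NSp M" by (rule NSp_sc)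
lemma NSp_0: "0 \<in> NSp M" using NSp_zero[of M] by (simp add: zero_fun_def)
lemma NSp_uminus: "f \<in> NSp M \<Longrightarrow> - f \<in> NSp M"
proof -
  assume "f \<in> NSp M"
  then have "fsc (-1) f \<in> NSp M" by (rule NSp_sc)
  moreover have "fsc (-1) f = - f" by (simp add: fsc_def fun_eq_iff)
  ultimately show ?thesis by simp
qed
lemma NSp_minus: "f \<in> NSp M \<Longrightarrow> g \<in> NSp M \<Longrightarrow> f - g \<in> NSp M"
  using NSp_plus[of f M "- g"] NSp_uminus[of g M] by simp
lemma NSp_eq: "f \<in> NSp M \<Longrightarrow> f = g \<Longrightarrow> g \<in> NSp M" by simp

lemma fin_plus: "finite (spt f) \<Longrightarrow> finite (spt g) \<Longrightarrow> finite (spt (f + g))"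
  by (rule finite_subset[of _ "spt f \<union> spt g"]) (auto simp: spt_def)
lemma fin_minus: "finite (spt f) \<Longrightarrow> finite (spt g) \<Longrightarrow> finite (spt (f - g))"
  by (rule finite_subset[of _ "spt f \<union> spt g"]) (auto simp: spt_def)
lemma fin_fsc: "finite (spt f) \<Longrightarrow> finite (spt (fsc c f))"
  by (rule finite_subset[of _ "spt f"]) (auto simp: spt_def fsc_def)
lemma fin_delta: "finite (spt (delta w))"
  by (rule finite_subset[of _ "{w}"]) (auto simp: spt_def delta_def)
lemma fin_0: "finite (spt 0)" by (simp add: spt_def)

lemma Rel_fin: "g \<in> Rel M \<Longrightarrow> finite (spt g)"
  unfolding Rel_def by (auto simp: fadd_eq intro!: fin_plus fin_fsc fin_delta)

lemma NSp_fin: "f \<in> NSp M \<Longrightarrow> finite (spt f)"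
proof (induction rule: NSp.induct)
  case NSp_zero then show ?case by (simp add: spt_def)
next
  case (NSp_rel g) then show ?case by (rule Rel_fin)
next
  case (NSp_add f g) then show ?case unfolding fadd_eq using fin_plus by blast
next
  case (NSp_sc f c) then show ?case using fin_fsc by blast
qed

lemma lext_sum: "finite S \<Longrightarrow> spt f \<subseteq> S \<Longrightarrow> lext \<phi> f = (\<lambda>v. \<Sum>w\<in>S. f w * \<phi> w v)"
  unfolding lext_def fun_eq_iff
  by (intro allI sum.mono_neutral_left) (auto simp: spt_def)

lemma lext_add: "finite (spt f) \<Longrightarrow> finite (spt g) \<Longrightarrow> lext \<phi> (f + g) = lext \<phi> f + lext \<phi> g"
proof -
  assume a: "finite (spt f)" "finite (spt g)"
  let ?S = "spt f \<union> spt g"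
  have "finite ?S" using a by simp
  then have "lext \<phi> (f + g) = (\<lambda>v. \<Sum>w\<in>?S. (f + g) w * \<phi> w v)"
    "lext \<phi> f = (\<lambda>v. \<Sum>w\<in>?S. f w * \<phi> w v)" "lext \<phi> g = (\<lambda>v. \<Sum>w\<in>?S. g w * \<phi> w v)"
    by (rule lext_sum; auto simp: spt_def)+
  then show ?thesis by (simp add: fun_eq_iff distrib_right sum.distrib)
qed

lemma lext_fsc: "finite (spt f) \<Longrightarrow> lext \<phi> (fsc c f) = fsc c (lext \<phi> f)"
proof -
  assume a: "finite (spt f)"
  then have "lext \<phi> (fsc c f) = (\<lambda>v. \<Sum>w\<in>spt f. fsc c f w * \<phi> w v)"
    "lext \<phi> f = (\<lambda>v. \<Sum>w\<in>spt f. f w * \<phi> w v)"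
    by (rule lext_sum; auto simp: spt_def fsc_def)+
  then show ?thesis by (simp add: fun_eq_iff fsc_def sum_distrib_left mult.assoc)
qed

lemma fsc_m1: "fsc (-1) f = - f" by (simp add: fsc_def fun_eq_iff)

lemma lext_uminus: "finite (spt f) \<Longrightarrow> lext \<phi> (- f) = - lext \<phi> f"
  using lext_fsc[of f \<phi> "-1"] by (simp add: fsc_m1)

lemma fin_uminus: "finite (spt f) \<Longrightarrow> finite (spt (- f))" by (simp add: spt_def)

lemma lext_minus: "finite (spt f) \<Longrightarrow> finite (spt g) \<Longrightarrow> lext \<phi> (f - g) = lext \<phi> f - lext \<phi> g"
  using lext_add[of f "- g" \<phi>] lext_uminus[of g \<phi>] by (simp add: fin_uminus)

lemma lext_delta: "lext \<phi> (delta w) = \<phi> w"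
proof -
  have "lext \<phi> (delta w) = (\<lambda>v. \<Sum>u\<in>{w}. delta w u * \<phi> u v)"
    by (rule lext_sum) (auto simp: spt_def delta_def)
  then show ?thesis by (simp add: delta_def)
qed

lemma lext_0: "lext \<phi> 0 = 0" by (simp add: lext_def fun_eq_iff)

lemma spt_lext: "v \<in> spt (lext \<phi> f) \<Longrightarrow> \<exists>w. w \<in> spt f \<and> v \<in> spt (\<phi> w)"
proof -
  assume "v \<in> spt (lext \<phi> f)"
  then have "(\<Sum>w\<in>{w. f w \<noteq> 0}. f w * \<phi> w v) \<noteq> 0" by (simp add: spt_def lext_def)
  then obtain w where "w \<in> {w. f w \<noteq> 0}" "f w * \<phi> w v \<noteq> 0"
    using sum.not_neutral_contains_not_neutral by blast
  then show ?thesis by (auto simp: spt_def)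
qed

lemma fin_lext: "finite (spt f) \<Longrightarrow> (\<And>w. finite (spt (\<phi> w))) \<Longrightarrow> finite (spt (lext \<phi> f))"
proof -
  assume a: "finite (spt f)" and b: "\<And>w. finite (spt (\<phi> w))"
  have "spt (lext \<phi> f) \<subseteq> (\<Union>w\<in>spt f. spt (\<phi> w))"
    using spt_lext by blast
  then show ?thesis using a b by (meson finite_UN_I finite_subset)
qed

lemma G1: assumes "wordv M w" "k < length w" "fst (w!k) = j" "x \<in> carr (M j)" "y \<in> carr (M j)"
  shows "delta (w[k:=(j, ad (M j) x y)]) - delta (w[k:=(j,x)]) - delta (w[k:=(j,y)]) \<in> NSp M"
proof -
  have "fadd (delta (w[k := (j, ad (M j) x y)]))
        (fsc (-1) (fadd (delta (w[k := (j, x)])) (delta (w[k := (j, y)])))) \<in> Rel M"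
    unfolding Rel_def
    apply (rule UnI1, rule UnI1, rule CollectI)
    apply (rule exI[of _ w], rule exI[of _ k], rule exI[of _ j], rule exI[of _ x], rule exI[of _ y])
    using assms by simp
  then have "fadd (delta (w[k := (j, ad (M j) x y)]))
        (fsc (-1) (fadd (delta (w[k := (j, x)])) (delta (w[k := (j, y)])))) \<in> NSp M" by (rule NSp_rel)
  then show ?thesis by (simp add: fadd_eq fsc_m1 algebra_simps)
qed

lemma G2: assumes "wordv M w" "k < length w" "fst (w!k) = j" "x \<in> carr (M j)"
  shows "delta (w[k:=(j, sc (M j) c x)]) - fsc c (delta (w[k:=(j,x)])) \<in> NSp M"
proof -
  have "fadd (delta (w[k := (j, sc (M j) c x)])) (fsc (- c) (delta (w[k := (j, x)]))) \<in> Rel M"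
    unfolding Rel_def
    apply (rule UnI1, rule UnI2, rule CollectI)
    apply (rule exI[of _ w], rule exI[of _ k], rule exI[of _ j], rule exI[of _ x], rule exI[of _ c])
    using assms by simp
  then have "fadd (delta (w[k := (j, sc (M j) c x)])) (fsc (- c) (delta (w[k := (j, x)]))) \<in> NSp M"
    by (rule NSp_rel)
  moreover have "fadd (delta (w[k := (j, sc (M j) c x)])) (fsc (- c) (delta (w[k := (j, x)])))
     = delta (w[k:=(j, sc (M j) c x)]) - fsc c (delta (w[k:=(j,x)]))"
    by (simp add: fadd_def fsc_def fun_eq_iff)
  ultimately show ?thesis by simp
qed

lemma G3: assumes "wordv M w" "Suc k < length w" "fst (w!k) = j" "fst (w ! Suc k) = j'"
    "x \<in> carr (M j)" "y \<in> carr (M j')"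
  shows "delta (w[k:=(j, rac (M j) x b), Suc k := (j', y)])
       - delta (w[k:=(j,x), Suc k := (j', lac (M j') b y)]) \<in> NSp M"
proof -
  have "fadd (delta (w[k := (j, rac (M j) x b), Suc k := (j', y)]))
        (fsc (-1) (delta (w[k := (j, x), Suc k := (j', lac (M j') b y)]))) \<in> Rel M"
    unfolding Rel_def
    apply (rule UnI2, rule CollectI)
    apply (rule exI[of _ w], rule exI[of _ k], rule exI[of _ j], rule exI[of _ j'], rule exI[of _ x], rule exI[of _ y], rule exI[of _ b])
    using assms by simp
  then have "fadd (delta (w[k := (j, rac (M j) x b), Suc k := (j', y)]))
        (fsc (-1) (delta (w[k := (j, x), Suc k := (j', lac (M j') b y)]))) \<in> NSp M" by (rule NSp_rel)
  then show ?thesis by (simp add: fadd_eq fsc_m1 algebra_simps)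
qed

lemma wordv_Cons: "wordv M ((j,x)#r) \<longleftrightarrow> x \<in> carr (M j) \<and> (r = [] \<or> (wordv M r \<and> fst (hd r) \<noteq> j))"
proof
  assume a: "wordv M ((j,x)#r)"
  have x: "x \<in> carr (M j)" using a unfolding wordv_def by force
  show "x \<in> carr (M j) \<and> (r = [] \<or> (wordv M r \<and> fst (hd r) \<noteq> j))"
  proof (cases r)
    case Nil then show ?thesis using x by simp
  next
    case (Cons q r')
    have "\<forall>k < length r. snd (r ! k) \<in> carr (M (fst (r ! k)))"
    proof (intro allI impI)
      fix k assume "k < length r"
      then show "snd (r ! k) \<in> carr (M (fst (r ! k)))"
        using a unfolding wordv_def by (metis Suc_less_eq length_Cons nth_Cons_Suc)
    qed
    moreover have "\<forall>k. Suc k < length r \<longrightarrow> fst (r ! k) \<noteq> fst (r ! Suc k)"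
    proof (intro allI impI)
      fix k assume "Suc k < length r"
      then show "fst (r ! k) \<noteq> fst (r ! Suc k)"
        using a unfolding wordv_def by (metis Suc_less_eq length_Cons nth_Cons_Suc)
    qed
    moreover have "fst (hd r) \<noteq> j"
      using a Cons unfolding wordv_def by (metis fst_conv length_Cons list.sel(1) nth_Cons_0 nth_Cons_Suc zero_less_Suc Suc_less_eq)
    ultimately show ?thesis using x Cons by (simp add: wordv_def)
  qed
next
  assume a: "x \<in> carr (M j) \<and> (r = [] \<or> (wordv M r \<and> fst (hd r) \<noteq> j))"
  show "wordv M ((j,x)#r)"
    unfolding wordv_def
  proof (intro conjI allI impI)
    show "(j, x) # r \<noteq> []" by simp
  next
    fix k assume k: "k < length ((j, x) # r)"
    show "snd (((j, x) # r) ! k) \<in> carr (M (fst (((j, x) # r) ! k)))"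
    proof (cases k)
      case 0 then show ?thesis using a by simp
    next
      case (Suc k') then show ?thesis using a k unfolding wordv_def by auto
    qed
  next
    fix k assume k: "Suc k < length ((j, x) # r)"
    show "fst (((j, x) # r) ! k) \<noteq> fst (((j, x) # r) ! Suc k)"
    proof (cases k)
      case 0 then show ?thesis using a k by (cases r) auto
    next
      case (Suc k') then show ?thesis using a k unfolding wordv_def by auto
    qed
  qed
qed

lemma wordv_ne: "wordv M w \<Longrightarrow> w \<noteq> []" by (simp add: wordv_def)

lemma wordv_upd: "wordv M w \<Longrightarrow> k < length w \<Longrightarrow> fst (w!k) = j \<Longrightarrow> v \<in> carr (M j) \<Longrightarrow> wordv M (w[k:=(j,v)])"
  unfolding wordv_def by (auto simp: nth_list_update)

lemma wl_Cons[simp]: "wl M c ((j,x)#r) = (j, lac (M j) c x)#r" by (simp add: wl_def)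

lemma wl_ne: "w \<noteq> [] \<Longrightarrow> wl M c w = w[0 := (fst (hd w), lac (M (fst (hd w))) c (snd (hd w)))]"
  by (cases w) auto

lemma length_wl[simp]: "length (wl M c w) = length w" by (cases w) (auto simp: wl_def)
lemma wl_nth: "k \<noteq> 0 \<Longrightarrow> wl M c w ! k = w ! k"
  by (cases w; cases k) (auto simp: wl_def)
lemma wl_nth0: "w \<noteq> [] \<Longrightarrow> fst (wl M c w ! 0) = fst (w ! 0)"
  by (cases w) (auto simp: wl_def)
lemma hd_wl: "w \<noteq> [] \<Longrightarrow> fst (hd (wl M c w)) = fst (hd w)"
  by (cases w) (auto simp: wl_def)

lemma wl_upd: "k < length w \<Longrightarrow> k \<noteq> 0 \<Longrightarrow> wl M c (w[k:=q]) = (wl M c w)[k:=q]"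
  by (cases w; cases k) (auto simp: wl_def)
lemma wl_upd0: "w \<noteq> [] \<Longrightarrow> wl M c (w[0:=(j,v)]) = w[0:=(j, lac (M j) c v)]"
  by (cases w) auto

context fp begin

lemma wordv_wl: "wordv M w \<Longrightarrow> wordv M (wl M c w)"
proof -
  assume a: "wordv M w"
  then obtain j x r where w: "w = (j,x)#r" by (cases w) (auto simp: wordv_def)
  show ?thesis using a unfolding w by (auto simp: lac_c wordv_Cons)
qed

lemma WL_G1: assumes "wordv M w" "k < length w" "fst (w!k) = j" "x \<in> carr (M j)" "y \<in> carr (M j)"
  shows "delta (wl M c (w[k:=(j, ad (M j) x y)])) - delta (wl M c (w[k:=(j,x)])) - delta (wl M c (w[k:=(j,y)])) \<in> NSp M"
proof (cases "k = 0")
  case True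
  have ne: "w \<noteq> []" using assms wordv_ne by blast
  have "delta (w[0:=(j, ad (M j) (lac (M j) c x) (lac (M j) c y))]) - delta (w[0:=(j,lac (M j) c x)]) - delta (w[0:=(j,lac (M j) c y)]) \<in> NSp M"
    using G1[OF assms(1) _ _ lac_c lac_c] assms True by simp
  then show ?thesis using True ne assms by (simp add: wl_upd0 lac_ad)
next
  case False
  have "delta ((wl M c w)[k:=(j, ad (M j) x y)]) - delta ((wl M c w)[k:=(j,x)]) - delta ((wl M c w)[k:=(j,y)]) \<in> NSp M"
    using G1[OF wordv_wl[OF assms(1)]] assms False by (simp add: wl_nth)
  then show ?thesis using False assms by (simp add: wl_upd)
qed

lemma WL_G2: assumes "wordv M w" "k < length w" "fst (w!k) = j" "x \<in> carr (M j)"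
  shows "delta (wl M c (w[k:=(j, sc (M j) d x)])) - fsc d (delta (wl M c (w[k:=(j,x)]))) \<in> NSp M"
proof (cases "k = 0")
  case True
  have ne: "w \<noteq> []" using assms wordv_ne by blast
  have "delta (w[0:=(j, sc (M j) d (lac (M j) c x))]) - fsc d (delta (w[0:=(j,lac (M j) c x)])) \<in> NSp M"
    using G2[OF assms(1) _ _ lac_c] assms True by simp
  then show ?thesis using True ne assms by (simp add: wl_upd0 lac_sc)
next
  case False
  have "delta ((wl M c w)[k:=(j, sc (M j) d x)]) - fsc d (delta ((wl M c w)[k:=(j,x)])) \<in> NSp M"
    using G2[OF wordv_wl[OF assms(1)]] assms False by (simp add: wl_nth)
  then show ?thesis using False assms by (simp add: wl_upd)
qed

lemma WL_G3: assumes "wordv M w" "Suc k < length w" "fst (w!k) = j" "fst (w ! Suc k) = j'"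
    "x \<in> carr (M j)" "y \<in> carr (M j')"
  shows "delta (wl M c (w[k:=(j, rac (M j) x e), Suc k := (j', y)]))
       - delta (wl M c (w[k:=(j,x), Suc k := (j', lac (M j') e y)])) \<in> NSp M"
proof (cases "k = 0")
  case True
  have ne: "w \<noteq> []" using assms wordv_ne by blast
  have "delta (w[0:=(j, rac (M j) (lac (M j) c x) e), Suc 0 := (j', y)])
       - delta (w[0:=(j,lac (M j) c x), Suc 0 := (j', lac (M j') e y)]) \<in> NSp M"
    using G3[OF assms(1) _ _ _ lac_c assms(6)] assms True by simp
  moreover have "wl M c (w[0:=(j, rac (M j) x e), Suc 0 := (j', y)]) = w[0:=(j, rac (M j) (lac (M j) c x) e), Suc 0 := (j', y)]"
    using ne assms by (cases w) (auto simp: compat)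
  moreover have "wl M c (w[0:=(j, x), Suc 0 := (j', lac (M j') e y)]) = w[0:=(j, lac (M j) c x), Suc 0 := (j', lac (M j') e y)]"
    using ne assms by (cases w) auto
  ultimately show ?thesis using True by simp
next
  case False
  have "delta ((wl M c w)[k:=(j, rac (M j) x e), Suc k := (j', y)])
       - delta ((wl M c w)[k:=(j,x), Suc k := (j', lac (M j') e y)]) \<in> NSp M"
    using G3[OF wordv_wl[OF assms(1)]] assms False by (simp add: wl_nth)
  moreover have "wl M c (w[k:=(j, rac (M j) x e), Suc k := (j', y)]) = (wl M c w)[k:=(j, rac (M j) x e), Suc k := (j', y)]"
    using False assms by (simp add: wl_upd)
  moreover have "wl M c (w[k:=(j, x), Suc k := (j', lac (M j') e y)]) = (wl M c w)[k:=(j, x), Suc k := (j', lac (M j') e y)]"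
    using False assms by (simp add: wl_upd)
  ultimately show ?thesis by simp
qed

lemma CONS_G1: assumes "wordv M w" "k < length w" "fst (w!k) = j" "x \<in> carr (M j)" "y \<in> carr (M j)"
    "fst (hd w) \<noteq> j0" "v0 \<in> carr (M j0)"
  shows "delta ((j0,v0) # w[k:=(j, ad (M j) x y)]) - delta ((j0,v0) # w[k:=(j,x)]) - delta ((j0,v0) # w[k:=(j,y)]) \<in> NSp M"
proof -
  have wv: "wordv M ((j0,v0)#w)" using assms wordv_ne[OF assms(1)] by (simp add: wordv_Cons)
  show ?thesis using G1[OF wv, of "Suc k"] assms by simp
qed

lemma CONS_G2: assumes "wordv M w" "k < length w" "fst (w!k) = j" "x \<in> carr (M j)"
    "fst (hd w) \<noteq> j0" "v0 \<in> carr (M j0)"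
  shows "delta ((j0,v0) # w[k:=(j, sc (M j) d x)]) - fsc d (delta ((j0,v0) # w[k:=(j,x)])) \<in> NSp M"
proof -
  have wv: "wordv M ((j0,v0)#w)" using assms wordv_ne[OF assms(1)] by (simp add: wordv_Cons)
  show ?thesis using G2[OF wv, of "Suc k"] assms by simp
qed

lemma CONS_G3: assumes "wordv M w" "Suc k < length w" "fst (w!k) = j" "fst (w ! Suc k) = j'"
    "x \<in> carr (M j)" "y \<in> carr (M j')" "fst (hd w) \<noteq> j0" "v0 \<in> carr (M j0)"
  shows "delta ((j0,v0) # w[k:=(j, rac (M j) x e), Suc k := (j', y)])
       - delta ((j0,v0) # w[k:=(j,x), Suc k := (j', lac (M j') e y)]) \<in> NSp M"
proof -
  have wv: "wordv M ((j0,v0)#w)" using assms wordv_ne[OF assms(1)] by (simp add: wordv_Cons)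
  show ?thesis using G3[OF wv, of "Suc k"] assms by simp
qed

end

lemma fsc_add: "fsc c (f + g) = fsc c f + fsc c g" by (simp add: fsc_def fun_eq_iff algebra_simps)
lemma fsc_minus: "fsc c (f - g) = fsc c f - fsc c g" by (simp add: fsc_def fun_eq_iff algebra_simps)

lemma lamw_A: "lamw M i a [(i,x)] = (fst (a (0,x)), delta [(i, snd (a (0,x)))])"
  by (simp add: lamw_def split_def Let_def)
lemma lamw_B: "r \<noteq> [] \<Longrightarrow> lamw M i a ((i,x)#r) = (0, delta (wl M (fst (a (0,x))) r) + delta ((i, snd (a (0,x)))#r))"
  by (simp add: lamw_def split_def Let_def fadd_eq)
lemma lamw_C: "w \<noteq> [] \<Longrightarrow> fst (hd w) \<noteq> i \<Longrightarrow> lamw M i a w =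
   (0, delta (wl M (fst (a (1, zer (M i)))) w) + delta ((i, snd (a (1, zer (M i))))#w))"
  by (simp add: lamw_def split_def Let_def fadd_eq)

lemma hd_upd: "k < length w \<Longrightarrow> fst (w!k) = j \<Longrightarrow> fst (hd (w[k:=(j,v)])) = fst (hd w)"
  by (cases w; cases k) auto
lemma ne_upd: "w \<noteq> [] \<Longrightarrow> w[k:=q] \<noteq> []" by (cases w; cases k) auto

context fp begin

lemma op_c: "a \<in> opL scB (M i) \<Longrightarrow> x \<in> carr (M i) \<Longrightarrow> snd (a (b0, x)) \<in> carr (M i)"
  unfolding opL_def pcar_def by (auto simp: Pi_def mem_Times_iff)
lemma op_add: assumes "a \<in> opL scB (M i)" "x \<in> carr (M i)" "y \<in> carr (M i)"
  shows "a (b0 + b1, ad (M i) x y) = (fst (a (b0,x)) + fst (a (b1,y)), ad (M i) (snd (a (b0,x))) (snd (a (b1,y))))"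
proof -
  have "a (padd (M i) (b0,x) (b1,y)) = padd (M i) (a (b0,x)) (a (b1,y))"
    using assms unfolding opL_def pcar_def by auto
  then show ?thesis by (simp add: padd_def)
qed
lemma op_ad: assumes "a \<in> opL scB (M i)" "x \<in> carr (M i)" "y \<in> carr (M i)"
  shows "a (0, ad (M i) x y) = (fst (a (0,x)) + fst (a (0,y)), ad (M i) (snd (a (0,x))) (snd (a (0,y))))"
  using op_add[OF assms, of 0 0] by simp
lemma op_sc: assumes "a \<in> opL scB (M i)" "x \<in> carr (M i)"
  shows "a (scB c b0, sc (M i) c x) = (scB c (fst (a (b0,x))), sc (M i) c (snd (a (b0,x))))"
proof -
  have "a (psc scB (M i) c (b0,x)) = psc scB (M i) c (a (b0,x))"
    using assms unfolding opL_def pcar_def by auto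
  then show ?thesis by (simp add: psc_def)
qed
lemma op_sc0: assumes "a \<in> opL scB (M i)" "x \<in> carr (M i)"
  shows "a (0, sc (M i) c x) = (scB c (fst (a (0,x))), sc (M i) c (snd (a (0,x))))"
  using op_sc[OF assms, of c 0] by (simp add: scB_zero)
lemma op_rac: assumes "a \<in> opL scB (M i)" "x \<in> carr (M i)"
  shows "a (0, rac (M i) x e) = (fst (a (0,x)) * e, rac (M i) (snd (a (0,x))) e)"
proof -
  have "a (prac (M i) (0,x) e) = prac (M i) (a (0,x)) e"
    using assms unfolding opL_def pcar_def by auto
  then show ?thesis by (simp add: prac_def)
qed

definition phi :: "('b \<times> 'm \<Rightarrow> 'b \<times> 'm) \<Rightarrow> ('i, 'm) word \<Rightarrow> ('i, 'm) fvec" where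
  "phi a w = snd (lamw M i a w)"

lemma TG1: assumes b: "b \<in> opL scB (M i)" and
  a: "wordv M w" "k < length w" "fst (w!k) = j" "x \<in> carr (M j)" "y \<in> carr (M j)"
  shows "phi b (w[k:=(j, ad (M j) x y)]) - phi b (w[k:=(j,x)]) - phi b (w[k:=(j,y)]) \<in> NSp M"
proof -
  obtain j0 x0 r where w: "w = (j0,x0)#r" using a wordv_ne by (cases w) auto
  show ?thesis
  proof (cases "j0 = i")
    case False
    let ?c = "fst (b (1, zer (M i)))" and ?e = "snd (b (1, zer (M i)))"
    have ne: "w \<noteq> []" using w by simp
    have hd: "\<And>v. fst (hd (w[k:=(j,v)])) \<noteq> i" using hd_upd[OF a(2,3)] False w by simp
    have e: "?e \<in> carr (M i)" using op_c[OF b zer_c] .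
    have "phi b (w[k:=(j, ad (M j) x y)]) - phi b (w[k:=(j,x)]) - phi b (w[k:=(j,y)]) =
      (delta (wl M ?c (w[k:=(j, ad (M j) x y)])) - delta (wl M ?c (w[k:=(j,x)])) - delta (wl M ?c (w[k:=(j,y)])))
      + (delta ((i,?e) # w[k:=(j, ad (M j) x y)]) - delta ((i,?e) # w[k:=(j,x)]) - delta ((i,?e) # w[k:=(j,y)]))"
      unfolding phi_def using lamw_C[OF ne_upd[OF ne] hd, of M b] by (simp add: algebra_simps)
    also have "\<dots> \<in> NSp M"
      by (rule NSp_plus[OF WL_G1[OF a] CONS_G1[OF a _ e]]) (use False w in simp)
    finally show ?thesis .
  next
    case True
    have x0: "x0 \<in> carr (M i)" using a(1) w True by (simp add: wordv_Cons)
    show ?thesis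
    proof (cases "r = []")
      case True
      then have k: "k = 0" "j = i" using a w \<open>j0 = i\<close> by auto
      have xy: "x \<in> carr (M i)" "y \<in> carr (M i)" using a k by auto
      have wv: "wordv M [(i, snd (b (0,x)))]" using op_c[OF b xy(1)] by (simp add: wordv_Cons)
      show ?thesis using G1[OF wv, of 0 i "snd (b (0,x))" "snd (b (0,y))"] op_c[OF b] xy
        unfolding phi_def using k w True \<open>j0 = i\<close> by (simp add: lamw_A op_ad[OF b xy])
    next
      case False
      have r: "wordv M r" "fst (hd r) \<noteq> i" using a(1) w False \<open>j0 = i\<close> by (auto simp: wordv_Cons)
      obtain j1 y1 r' where r1: "r = (j1,y1)#r'" using False by (cases r) auto
      have y1: "y1 \<in> carr (M j1)" using r(1) r1 by (simp add: wordv_Cons)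
      show ?thesis
      proof (cases k)
        case 0
        then have j: "j = i" using a w \<open>j0 = i\<close> by simp
        have xy: "x \<in> carr (M i)" "y \<in> carr (M i)" using a j by auto
        let ?cx = "fst (b (0,x))" and ?cy = "fst (b (0,y))" and ?ex = "snd (b (0,x))" and ?ey = "snd (b (0,y))"
        have ex: "?ex \<in> carr (M i)" "?ey \<in> carr (M i)" using op_c[OF b] xy by auto
        have "phi b (w[k:=(j, ad (M j) x y)]) - phi b (w[k:=(j,x)]) - phi b (w[k:=(j,y)]) =
          (delta (r[0:=(j1, ad (M j1) (lac (M j1) ?cx y1) (lac (M j1) ?cy y1))]) - delta (r[0:=(j1, lac (M j1) ?cx y1)]) - delta (r[0:=(j1, lac (M j1) ?cy y1)]))
          + (delta (((i,?ex)#r)[0:=(i, ad (M i) ?ex ?ey)]) - delta (((i,?ex)#r)[0:=(i,?ex)]) - delta (((i,?ex)#r)[0:=(i,?ey)]))"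
          unfolding phi_def using 0 j w \<open>j0 = i\<close> False r1
          by (simp add: lamw_B op_ad[OF b xy] lac_add[OF y1] algebra_simps)
        also have "\<dots> \<in> NSp M"
          apply (rule NSp_plus)
          apply (rule G1[OF r(1)]) using r1 y1 apply (auto simp: lac_c)[4]
          apply (rule G1) using r ex apply (auto simp: wordv_Cons)
          done
        finally show ?thesis .
      next
        case (Suc k')
        let ?c = "fst (b (0,x0))" and ?e = "snd (b (0,x0))"
        have e: "?e \<in> carr (M i)" using op_c[OF b x0] .
        have a': "k' < length r" "fst (r!k') = j" using a w Suc by auto
        have ne: "\<And>v. r[k':=v] \<noteq> []" using False by (simp add: ne_upd)
        have "phi b (w[k:=(j, ad (M j) x y)]) - phi b (w[k:=(j,x)]) - phi b (w[k:=(j,y)]) =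
          (delta (wl M ?c (r[k':=(j, ad (M j) x y)])) - delta (wl M ?c (r[k':=(j,x)])) - delta (wl M ?c (r[k':=(j,y)])))
          + (delta ((i,?e) # r[k':=(j, ad (M j) x y)]) - delta ((i,?e) # r[k':=(j,x)]) - delta ((i,?e) # r[k':=(j,y)]))"
        proof -
          have L: "phi b ((i,x0) # r[k':=v]) = delta (wl M ?c (r[k':=v])) + delta ((i,?e) # r[k':=v])" for v
            unfolding phi_def using lamw_B[OF ne[of v], of M i b x0] by simp
          show ?thesis using Suc w \<open>j0 = i\<close> by (simp only: list_update.simps L nat.case) (simp add: algebra_simps)
        qed
        also have "\<dots> \<in> NSp M"
          by (rule NSp_plus[OF WL_G1[OF r(1) a' a(4,5)] CONS_G1[OF r(1) a' a(4,5) r(2) e]])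
        finally show ?thesis .
      qed
    qed
  qed
qed

end

context fp begin

lemma TG2: assumes b: "b \<in> opL scB (M i)" and
  a: "wordv M w" "k < length w" "fst (w!k) = j" "x \<in> carr (M j)"
  shows "phi b (w[k:=(j, sc (M j) d x)]) - fsc d (phi b (w[k:=(j,x)])) \<in> NSp M"
proof -
  obtain j0 x0 r where w: "w = (j0,x0)#r" using a wordv_ne by (cases w) auto
  show ?thesis
  proof (cases "j0 = i")
    case False
    let ?c = "fst (b (1, zer (M i)))" and ?e = "snd (b (1, zer (M i)))"
    have ne: "w \<noteq> []" using w by simp
    have hd: "\<And>v. fst (hd (w[k:=(j,v)])) \<noteq> i" using hd_upd[OF a(2,3)] False w by simp
    have e: "?e \<in> carr (M i)" using op_c[OF b zer_c] .
    have "phi b (w[k:=(j, sc (M j) d x)]) - fsc d (phi b (w[k:=(j,x)])) =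
      (delta (wl M ?c (w[k:=(j, sc (M j) d x)])) - fsc d (delta (wl M ?c (w[k:=(j,x)]))))
      + (delta ((i,?e) # w[k:=(j, sc (M j) d x)]) - fsc d (delta ((i,?e) # w[k:=(j,x)])))"
      unfolding phi_def using lamw_C[OF ne_upd[OF ne] hd, of M b] by (simp add: fsc_add algebra_simps)
    also have "\<dots> \<in> NSp M"
      by (rule NSp_plus[OF WL_G2[OF a] CONS_G2[OF a _ e]]) (use False w in simp)
    finally show ?thesis .
  next
    case True
    have x0: "x0 \<in> carr (M i)" using a(1) w True by (simp add: wordv_Cons)
    show ?thesis
    proof (cases "r = []")
      case True
      then have k: "k = 0" "j = i" using a w \<open>j0 = i\<close> by auto
      have xy: "x \<in> carr (M i)" using a k by auto
      have wv: "wordv M [(i, snd (b (0,x)))]" using op_c[OF b xy(1)] by (simp add: wordv_Cons)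
      show ?thesis using G2[OF wv, of 0 i "snd (b (0,x))" d] op_c[OF b] xy
        unfolding phi_def using k w True \<open>j0 = i\<close> by (simp add: lamw_A op_sc0[OF b xy])
    next
      case False
      have r: "wordv M r" "fst (hd r) \<noteq> i" using a(1) w False \<open>j0 = i\<close> by (auto simp: wordv_Cons)
      obtain j1 y1 r' where r1: "r = (j1,y1)#r'" using False by (cases r) auto
      have y1: "y1 \<in> carr (M j1)" using r(1) r1 by (simp add: wordv_Cons)
      show ?thesis
      proof (cases k)
        case 0
        then have j: "j = i" using a w \<open>j0 = i\<close> by simp
        have xy: "x \<in> carr (M i)" using a j by auto
        let ?cx = "fst (b (0,x))" and ?ex = "snd (b (0,x))"
        have ex: "?ex \<in> carr (M i)" using op_c[OF b] xy by auto
        have "phi b (w[k:=(j, sc (M j) d x)]) - fsc d (phi b (w[k:=(j,x)])) =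
          (delta (r[0:=(j1, sc (M j1) d (lac (M j1) ?cx y1))]) - fsc d (delta (r[0:=(j1, lac (M j1) ?cx y1)])))
          + (delta (((i,?ex)#r)[0:=(i, sc (M i) d ?ex)]) - fsc d (delta (((i,?ex)#r)[0:=(i,?ex)])))"
          unfolding phi_def using 0 j w \<open>j0 = i\<close> False r1
          by (simp add: lamw_B op_sc0[OF b xy] lac_scB[OF y1] fsc_add algebra_simps)
        also have "\<dots> \<in> NSp M"
          apply (rule NSp_plus)
          apply (rule G2[OF r(1)]) using r1 y1 apply (auto simp: lac_c)[3]
          apply (rule G2) using r ex apply (auto simp: wordv_Cons)
          done
        finally show ?thesis .
      next
        case (Suc k')
        let ?c = "fst (b (0,x0))" and ?e = "snd (b (0,x0))"
        have e: "?e \<in> carr (M i)" using op_c[OF b x0] .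
        have a': "k' < length r" "fst (r!k') = j" using a w Suc by auto
        have ne: "\<And>v. r[k':=v] \<noteq> []" using False by (simp add: ne_upd)
        have "phi b (w[k:=(j, sc (M j) d x)]) - fsc d (phi b (w[k:=(j,x)])) =
          (delta (wl M ?c (r[k':=(j, sc (M j) d x)])) - fsc d (delta (wl M ?c (r[k':=(j,x)]))))
          + (delta ((i,?e) # r[k':=(j, sc (M j) d x)]) - fsc d (delta ((i,?e) # r[k':=(j,x)])))"
        proof -
          have L: "phi b ((i,x0) # r[k':=v]) = delta (wl M ?c (r[k':=v])) + delta ((i,?e) # r[k':=v])" for v
            unfolding phi_def using lamw_B[OF ne[of v], of M i b x0] by simp
          show ?thesis using Suc w \<open>j0 = i\<close> by (simp only: list_update.simps L nat.case) (simp add: fsc_add algebra_simps)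
        qed
        also have "\<dots> \<in> NSp M"
          by (rule NSp_plus[OF WL_G2[OF r(1) a' a(4)] CONS_G2[OF r(1) a' a(4) r(2) e]])
        finally show ?thesis .
      qed
    qed
  qed
qed

lemma TG3: assumes b: "b \<in> opL scB (M i)" and
  a: "wordv M w" "Suc k < length w" "fst (w!k) = j" "fst (w ! Suc k) = j'"
    "x \<in> carr (M j)" "y \<in> carr (M j')"
  shows "phi b (w[k:=(j, rac (M j) x e), Suc k := (j', y)])
       - phi b (w[k:=(j,x), Suc k := (j', lac (M j') e y)]) \<in> NSp M"
proof -
  obtain j0 x0 r where w: "w = (j0,x0)#r" using a wordv_ne by (cases w) auto
  have kl: "k < length w" using a(2) by simp
  show ?thesis
  proof (cases "j0 = i")
    case False
    let ?c = "fst (b (1, zer (M i)))" and ?e = "snd (b (1, zer (M i)))"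
    have ne: "w \<noteq> []" using w by simp
    have hd: "\<And>v v'. fst (hd (w[k:=(j,v), Suc k := (j',v')])) \<noteq> i"
      using hd_upd[OF kl a(3)] False w by (cases k) auto
    have ne2: "\<And>v v'. w[k:=(j,v), Suc k := (j',v')] \<noteq> []" using ne by (simp add: ne_upd)
    have ee: "?e \<in> carr (M i)" using op_c[OF b zer_c] .
    have "phi b (w[k:=(j, rac (M j) x e), Suc k := (j', y)])
       - phi b (w[k:=(j,x), Suc k := (j', lac (M j') e y)]) =
      (delta (wl M ?c (w[k:=(j, rac (M j) x e), Suc k := (j', y)])) - delta (wl M ?c (w[k:=(j,x), Suc k := (j', lac (M j') e y)])))
      + (delta ((i,?e) # w[k:=(j, rac (M j) x e), Suc k := (j', y)]) - delta ((i,?e) # w[k:=(j,x), Suc k := (j', lac (M j') e y)]))"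
      unfolding phi_def using lamw_C[OF ne2 hd, of M b] by (simp add: algebra_simps)
    also have "\<dots> \<in> NSp M"
      by (rule NSp_plus[OF WL_G3[OF a] CONS_G3[OF a _ ee]]) (use False w in simp)
    finally show ?thesis .
  next
    case True
    have x0: "x0 \<in> carr (M i)" using a(1) w True by (simp add: wordv_Cons)
    have False': "r \<noteq> []" using a(2) w by auto
    have r: "wordv M r" "fst (hd r) \<noteq> i" using a(1) w False' \<open>j0 = i\<close> by (auto simp: wordv_Cons)
    obtain j1 y1 r' where r1: "r = (j1,y1)#r'" using False' by (cases r) auto
    show ?thesis
    proof (cases k)
      case 0
      then have j: "j = i" "j' = j1" using a w \<open>j0 = i\<close> r1 by auto
      have xy: "x \<in> carr (M i)" "y \<in> carr (M j1)" using a j by auto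
      let ?cx = "fst (b (0,x))" and ?ex = "snd (b (0,x))"
      have ex: "?ex \<in> carr (M i)" using op_c[OF b] xy by auto
      have eq1: "lac (M j1) (?cx * e) y = lac (M j1) ?cx (lac (M j1) e y)" by (rule lac_mult[OF xy(2)])
      have "phi b (w[k:=(j, rac (M j) x e), Suc k := (j', y)])
         - phi b (w[k:=(j,x), Suc k := (j', lac (M j') e y)]) =
         delta (((i,?ex)#r)[0:=(i, rac (M i) ?ex e), Suc 0 := (j1, y)])
         - delta (((i,?ex)#r)[0:=(i, ?ex), Suc 0 := (j1, lac (M j1) e y)])"
        unfolding phi_def using 0 j w \<open>j0 = i\<close> r1
        by (simp add: lamw_B op_rac[OF b xy(1)] eq1 algebra_simps)
      also have "\<dots> \<in> NSp M"
        apply (rule G3) using r ex xy r1 by (auto simp: wordv_Cons)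
      finally show ?thesis .
    next
      case (Suc k')
      let ?c = "fst (b (0,x0))" and ?e = "snd (b (0,x0))"
      have ee: "?e \<in> carr (M i)" using op_c[OF b x0] .
      have a': "Suc k' < length r" "fst (r!k') = j" "fst (r ! Suc k') = j'" using a w Suc by auto
      have ne: "\<And>v v'. r[k':=v, Suc k' := v'] \<noteq> []" using False' by (simp add: ne_upd)
      have "phi b (w[k:=(j, rac (M j) x e), Suc k := (j', y)])
         - phi b (w[k:=(j,x), Suc k := (j', lac (M j') e y)]) =
        (delta (wl M ?c (r[k':=(j, rac (M j) x e), Suc k' := (j', y)])) - delta (wl M ?c (r[k':=(j,x), Suc k' := (j', lac (M j') e y)])))
        + (delta ((i,?e) # r[k':=(j, rac (M j) x e), Suc k' := (j', y)]) - delta ((i,?e) # r[k':=(j,x), Suc k' := (j', lac (M j') e y)]))"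
      proof -
        have L: "phi b ((i,x0) # r[k':=v, Suc k' := v']) = delta (wl M ?c (r[k':=v, Suc k' := v'])) + delta ((i,?e) # r[k':=v, Suc k' := v'])" for v v'
          unfolding phi_def using lamw_B[OF ne[of v v'], of M i b x0] by simp
        show ?thesis using Suc w \<open>j0 = i\<close> by (simp only: list_update.simps L nat.case) (simp add: algebra_simps)
      qed
      also have "\<dots> \<in> NSp M"
        by (rule NSp_plus[OF WL_G3[OF r(1) a' a(5,6)] CONS_G3[OF r(1) a' a(5,6) r(2) ee]])
      finally show ?thesis .
    qed
  qed
qed

end

lemma FV_iff: "f \<in> FV M \<longleftrightarrow> finite (spt f) \<and> (\<forall>w\<in>spt f. wordv M w)"
  by (auto simp: FV_def spt_def)
lemma delta_ne: "delta u v \<noteq> 0 \<Longrightarrow> v = u" by (simp add: delta_def split: if_splits)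
lemma FV_delta: "wordv M w \<Longrightarrow> delta w \<in> FV M"
  unfolding FV_iff using fin_delta[of w] by (auto simp: spt_def dest: delta_ne)
lemma FV_plus: assumes "f \<in> FV M" "g \<in> FV M" shows "f + g \<in> FV M"
proof -
  have "spt (f + g) \<subseteq> spt f \<union> spt g" by (auto simp: spt_def)
  then show ?thesis using assms unfolding FV_iff using fin_plus by blast
qed
lemma FV_minus: assumes "f \<in> FV M" "g \<in> FV M" shows "f - g \<in> FV M"
proof -
  have "spt (f - g) \<subseteq> spt f \<union> spt g" by (auto simp: spt_def)
  then show ?thesis using assms unfolding FV_iff using fin_minus by blast
qed
lemma FV_fsc: "f \<in> FV M \<Longrightarrow> fsc c f \<in> FV M"
  by (auto simp: FV_iff fin_fsc) (auto simp: spt_def fsc_def)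
lemma FV_0: "0 \<in> FV M" by (simp add: FV_iff spt_def)

definition I1 :: "'i \<Rightarrow> ('i, 'm) word \<Rightarrow> bool" where
  "I1 i w \<longleftrightarrow> length w = 1 \<and> fst (hd w) = i"

definition rs :: "'i \<Rightarrow> ('i, 'm) fvec \<Rightarrow> ('i, 'm) fvec" where
  "rs i f = (\<lambda>w. if I1 i w then f w else 0)"

lemma rs_plus: "rs i (f + g) = rs i f + rs i g" by (simp add: rs_def fun_eq_iff)
lemma rs_minus: "rs i (f - g) = rs i f - rs i g" by (simp add: rs_def fun_eq_iff)
lemma fsc_0: "fsc c 0 = 0" by (simp add: fsc_def fun_eq_iff)
lemma rs_uminus: "rs i (- f) = - rs i f" by (simp add: rs_def fun_eq_iff)
lemma rs_fsc: "rs i (fsc c f) = fsc c (rs i f)" by (simp add: rs_def fun_eq_iff fsc_def)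
lemma rs_rs: "rs i (rs i f) = rs i f" by (simp add: rs_def fun_eq_iff)
lemma FV_rs: "f \<in> FV M \<Longrightarrow> rs i f \<in> FV M"
  by (auto simp: FV_iff rs_def spt_def intro: finite_subset[of _ "{w. f w \<noteq> 0}"])
lemma rs_delta: "rs i (delta u) = (if I1 i u then delta u else 0)"
  by (auto simp: rs_def fun_eq_iff delta_def)

lemma I1_upd: "k < length w \<Longrightarrow> fst (w!k) = j \<Longrightarrow> I1 i (w[k:=(j,v)]) = I1 i w"
  by (simp add: I1_def hd_upd)

lemma rs_NSp: "n \<in> NSp M \<Longrightarrow> rs i n \<in> NSp M"
proof (induction rule: NSp.induct)
  case NSp_zero
  show ?case unfolding rs_def by simp (rule NSp.NSp_zero)
next
  case (NSp_rel g)
  then show ?case unfolding Rel_def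
  proof (elim UnE CollectE exE conjE)
    fix w k j x y assume g: "g = fadd (delta (w[k := (j, ad (M j) x y)])) (fsc (- 1) (fadd (delta (w[k := (j, x)])) (delta (w[k := (j, y)]))))"
      and h: "k < length w" "fst (w ! k) = j"
    have "rs i g = (if I1 i w then g else 0)"
      unfolding g fadd_eq fsc_m1 by (cases "I1 i w") (simp_all add: rs_plus rs_minus rs_uminus rs_delta I1_upd[OF h])
    then show ?thesis using NSp.NSp_rel[OF NSp_rel] NSp_0[of M] by simp
  next
    fix w k j x c assume g: "g = fadd (delta (w[k := (j, sc (M j) c x)])) (fsc (- c) (delta (w[k := (j, x)])))"
      and h: "k < length w" "fst (w ! k) = j"
    have "rs i g = (if I1 i w then g else 0)"
      unfolding g fadd_eq by (cases "I1 i w") (simp_all add: rs_plus rs_fsc rs_delta I1_upd[OF h] fsc_0)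
    then show ?thesis using NSp.NSp_rel[OF NSp_rel] NSp_0[of M] by simp
  next
    fix w k j j' x y b assume g: "g = fadd (delta (w[k := (j, rac (M j) x b), Suc k := (j', y)]))
        (fsc (-1) (delta (w[k := (j, x), Suc k := (j', lac (M j') b y)])))"
      and h: "Suc k < length w" "fst (w ! k) = j" "fst (w ! Suc k) = j'"
    have h1: "k < length w" using h by simp
    have h2: "\<And>v. Suc k < length (w[k := (j, v)])" "\<And>v. fst ((w[k := (j, v)]) ! Suc k) = j'" using h by auto
    have "rs i g = (if I1 i w then g else 0)"
      unfolding g fadd_eq fsc_m1 by (cases "I1 i w") (simp_all add: rs_plus rs_minus rs_uminus rs_delta I1_upd[OF h2] I1_upd[OF h1 h(2)])
    then show ?thesis using NSp.NSp_rel[OF NSp_rel] NSp_0[of M] by simp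
  qed
next
  case (NSp_add f g)
  have "rs i (fadd f g) = rs i f + rs i g" by (simp only: fadd_eq rs_plus)
  then show ?case using NSp_add.IH NSp_plus by metis
next
  case (NSp_sc f c)
  have "rs i (fsc c f) = fsc c (rs i f)" by (simp only: rs_fsc)
  then show ?case using NSp_sc.IH NSp.NSp_sc by metis
qed

context fp begin

definition T :: "('b \<times> 'm \<Rightarrow> 'b \<times> 'm) \<Rightarrow> ('i, 'm) fvec \<Rightarrow> ('i, 'm) fvec" where
  "T a f = lext (phi a) f"

definition beta :: "('b \<times> 'm \<Rightarrow> 'b \<times> 'm) \<Rightarrow> ('i, 'm) fvec \<Rightarrow> 'b" where
  "beta a f = (\<Sum>w\<in>spt f. scB (f w) (fst (lamw M i a w)))"

lemma fin_phi: "finite (spt (phi a w))"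
  unfolding phi_def lamw_def by (auto simp: split_def Let_def fadd_eq intro!: fin_plus fin_delta)

lemma fin_T: "finite (spt f) \<Longrightarrow> finite (spt (T a f))"
  unfolding T_def by (rule fin_lext, assumption, rule fin_phi)

lemma T_plus: "finite (spt f) \<Longrightarrow> finite (spt g) \<Longrightarrow> T a (f + g) = T a f + T a g"
  unfolding T_def by (rule lext_add)
lemma T_minus: "finite (spt f) \<Longrightarrow> finite (spt g) \<Longrightarrow> T a (f - g) = T a f - T a g"
  unfolding T_def by (rule lext_minus)
lemma T_uminus: "finite (spt f) \<Longrightarrow> T a (- f) = - T a f"
  unfolding T_def by (rule lext_uminus)
lemma T_fsc: "finite (spt f) \<Longrightarrow> T a (fsc c f) = fsc c (T a f)"
  unfolding T_def by (rule lext_fsc)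
lemma T_delta: "T a (delta w) = phi a w"
  unfolding T_def by (rule lext_delta)
lemma T_0: "T a 0 = 0" unfolding T_def by (rule lext_0)

lemma T_NSp: assumes b: "b \<in> opL scB (M i)" shows "n \<in> NSp M \<Longrightarrow> T b n \<in> NSp M"
proof (induction rule: NSp.induct)
  case NSp_zero then show ?case using T_0[of b] NSp_0[of M] by (simp add: zero_fun_def)
next
  case (NSp_rel g)
  then show ?case unfolding Rel_def
  proof (elim UnE CollectE exE conjE)
    fix w k j x y assume g: "g = fadd (delta (w[k := (j, ad (M j) x y)])) (fsc (- 1) (fadd (delta (w[k := (j, x)])) (delta (w[k := (j, y)]))))"
      and h: "wordv M w" "k < length w" "fst (w ! k) = j" "x \<in> carr (M j)" "y \<in> carr (M j)"
    have "T b g = phi b (w[k:=(j, ad (M j) x y)]) - phi b (w[k:=(j,x)]) - phi b (w[k:=(j,y)])"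
      unfolding g fadd_eq fsc_m1
      by (simp add: T_minus T_plus T_uminus fin_delta fin_plus fin_minus fin_uminus T_delta diff_conv_add_uminus[symmetric])
    then show ?thesis using TG1[OF b h] by metis
  next
    fix w k j x c assume g: "g = fadd (delta (w[k := (j, sc (M j) c x)])) (fsc (- c) (delta (w[k := (j, x)])))"
      and h: "wordv M w" "k < length w" "fst (w ! k) = j" "x \<in> carr (M j)"
    have g': "g = delta (w[k := (j, sc (M j) c x)]) - fsc c (delta (w[k := (j, x)]))"
      unfolding g by (simp add: fadd_def fsc_def fun_eq_iff)
    have "T b g = phi b (w[k:=(j, sc (M j) c x)]) - fsc c (phi b (w[k:=(j,x)]))"
      unfolding g' by (simp add: T_minus fin_delta fin_fsc T_fsc T_delta)
    then show ?thesis using TG2[OF b h] by metis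
  next
    fix w k j j' x y e assume g: "g = fadd (delta (w[k := (j, rac (M j) x e), Suc k := (j', y)]))
        (fsc (-1) (delta (w[k := (j, x), Suc k := (j', lac (M j') e y)])))"
      and h: "wordv M w" "Suc k < length w" "fst (w ! k) = j" "fst (w ! Suc k) = j'" "x \<in> carr (M j)" "y \<in> carr (M j')"
    have "T b g = phi b (w[k := (j, rac (M j) x e), Suc k := (j', y)]) - phi b (w[k := (j, x), Suc k := (j', lac (M j') e y)])"
      unfolding g fadd_eq fsc_m1
      by (simp add: T_minus T_plus T_uminus fin_delta fin_uminus T_delta diff_conv_add_uminus[symmetric])
    then show ?thesis using TG3[OF b h] by metis
  qed
next
  case (NSp_add f g)
  have "T b (fadd f g) = T b f + T b g"
    using NSp_fin[OF NSp_add.hyps(1)] NSp_fin[OF NSp_add.hyps(2)] by (simp only: fadd_eq T_plus)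
  then show ?case using NSp_add.IH NSp_plus by metis
next
  case (NSp_sc f c)
  have "T b (fsc c f) = fsc c (T b f)" using NSp_fin[OF NSp_sc.hyps] by (simp only: T_fsc)
  then show ?case using NSp_sc.IH NSp.NSp_sc by metis
qed

end

lemma fst_lamw: "w \<noteq> [] \<Longrightarrow> fst (lamw M i a w) = (if fst (hd w) = i \<and> tl w = [] then fst (a (0, snd (hd w))) else 0)"
  by (simp add: lamw_def split_def Let_def)

lemma spt_delta2: "spt (delta u + delta u') \<subseteq> {u, u'}" by (auto simp: spt_def delta_def)
lemma spt_delta1: "spt (delta u) \<subseteq> {u}" by (auto simp: spt_def delta_def)

lemma I1_Cons2: "\<not> I1 i (p # q # r)" by (simp add: I1_def)
lemma I1_Cons2': "r \<noteq> [] \<Longrightarrow> \<not> I1 i (p # r)" by (cases r) (simp_all add: I1_def)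

context fp begin

lemma scB_diffc: "scB (c - d) x = scB c x - scB d x"
  using scB_addc[of "c - d" d x] by simp

lemma beta_sum: "finite S \<Longrightarrow> spt f \<subseteq> S \<Longrightarrow> beta a f = (\<Sum>w\<in>S. scB (f w) (fst (lamw M i a w)))"
  unfolding beta_def by (rule sum.mono_neutral_left) (auto simp: spt_def scB_zeroc)

lemma beta_0: "beta a 0 = 0" by (simp add: beta_def spt_def)
lemma beta_plus: assumes "finite (spt f)" "finite (spt g)" shows "beta a (f + g) = beta a f + beta a g"
proof -
  let ?S = "spt f \<union> spt g"
  have "beta a (f + g) = (\<Sum>w\<in>?S. scB ((f+g) w) (fst (lamw M i a w)))"
    "beta a f = (\<Sum>w\<in>?S. scB (f w) (fst (lamw M i a w)))" "beta a g = (\<Sum>w\<in>?S. scB (g w) (fst (lamw M i a w)))"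
    by (rule beta_sum; use assms in \<open>auto simp: spt_def\<close>)+
  then show ?thesis by (simp add: scB_addc sum.distrib)
qed
lemma beta_minus: assumes "finite (spt f)" "finite (spt g)" shows "beta a (f - g) = beta a f - beta a g"
proof -
  let ?S = "spt f \<union> spt g"
  have "beta a (f - g) = (\<Sum>w\<in>?S. scB ((f-g) w) (fst (lamw M i a w)))"
    "beta a f = (\<Sum>w\<in>?S. scB (f w) (fst (lamw M i a w)))" "beta a g = (\<Sum>w\<in>?S. scB (g w) (fst (lamw M i a w)))"
    by (rule beta_sum; use assms in \<open>auto simp: spt_def\<close>)+
  then show ?thesis by (simp add: scB_diffc sum_subtractf)
qed
lemma beta_uminus: assumes "finite (spt f)" shows "beta a (- f) = - beta a f"
  using beta_minus[of 0 f a] assms by (simp add: spt_def beta_0)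
lemma beta_fsc: assumes "finite (spt f)" shows "beta a (fsc c f) = scB c (beta a f)"
proof -
  have "beta a (fsc c f) = (\<Sum>w\<in>spt f. scB (fsc c f w) (fst (lamw M i a w)))"
    "beta a f = (\<Sum>w\<in>spt f. scB (f w) (fst (lamw M i a w)))"
    by (rule beta_sum; use assms in \<open>auto simp: spt_def fsc_def\<close>)+
  then show ?thesis by (simp add: scB_sum[OF assms] fsc_def scB_mult)
qed
lemma beta_delta: "beta a (delta w) = fst (lamw M i a w)"
proof -
  have "beta a (delta w) = (\<Sum>u\<in>{w}. scB (delta w u) (fst (lamw M i a u)))"
    by (rule beta_sum) (auto simp: spt_def delta_def)
  then show ?thesis by (simp add: delta_def scB_one)
qed

lemma fst_lamw_upd: assumes "wordv M w" "k < length w" "fst (w!k) = j"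
  shows "fst (lamw M i a (w[k:=(j,v)])) = (if fst (hd w) = i \<and> tl w = [] then fst (a (0,v)) else 0)"
proof -
  obtain j0 x0 r where w: "w = (j0,x0)#r" using assms wordv_ne by (cases w) auto
  show ?thesis
  proof (cases "j0 = i \<and> r = []")
    case True
    then have "k = 0" using assms(2) w by simp
    then show ?thesis using True w assms(3) by (simp add: fst_lamw)
  next
    case False
    have ne': "w[k:=(j,v)] \<noteq> []" using w by (cases k) auto
    have hd': "fst (hd (w[k:=(j,v)])) = fst (hd w)" using hd_upd[OF assms(2,3)] .
    have tl': "tl (w[k:=(j,v)]) = [] \<longleftrightarrow> tl w = []" using w by (cases k) auto
    have F: "\<not> (fst (hd w) = i \<and> tl w = [])" using False w by simp
    show ?thesis using fst_lamw[OF ne', of M i a] hd' tl' F by auto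
  qed
qed

lemma fst_lamw_long: "Suc 0 < length w \<Longrightarrow> fst (lamw M i a w) = 0"
  by (cases w) (auto simp: fst_lamw)

lemma beta_NSp: assumes b: "b \<in> opL scB (M i)" shows "n \<in> NSp M \<Longrightarrow> beta b n = 0"
proof (induction rule: NSp.induct)
  case NSp_zero then show ?case using beta_0[of b] by (simp add: zero_fun_def)
next
  case (NSp_rel g)
  then show ?case unfolding Rel_def
  proof (elim UnE CollectE exE conjE)
    fix w k j x y assume g: "g = fadd (delta (w[k := (j, ad (M j) x y)])) (fsc (- 1) (fadd (delta (w[k := (j, x)])) (delta (w[k := (j, y)]))))"
      and h: "wordv M w" "k < length w" "fst (w ! k) = j" "x \<in> carr (M j)" "y \<in> carr (M j)"
    have "beta b g = fst (lamw M i b (w[k := (j, ad (M j) x y)])) - fst (lamw M i b (w[k := (j, x)])) - fst (lamw M i b (w[k := (j, y)]))"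
      unfolding g fadd_eq fsc_m1
      by (simp add: beta_plus beta_minus beta_uminus fin_delta fin_plus fin_minus fin_uminus beta_delta)
    also have "\<dots> = 0"
    proof (cases "fst (hd w) = i \<and> tl w = []")
      case True
      then have ji: "j = i" using h by (cases w) auto
      have "fst (b (0, ad (M j) x y)) = fst (b (0,x)) + fst (b (0,y))" using op_ad[OF b] h ji by simp
      then show ?thesis using True by (simp add: fst_lamw_upd[OF h(1-3)])
    next
      case False then show ?thesis by (auto simp: fst_lamw_upd[OF h(1-3)])
    qed
    finally show ?thesis .
  next
    fix w k j x c assume g: "g = fadd (delta (w[k := (j, sc (M j) c x)])) (fsc (- c) (delta (w[k := (j, x)])))"
      and h: "wordv M w" "k < length w" "fst (w ! k) = j" "x \<in> carr (M j)"
    have g': "g = delta (w[k := (j, sc (M j) c x)]) - fsc c (delta (w[k := (j, x)]))"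
      unfolding g by (simp add: fadd_def fsc_def fun_eq_iff)
    have "beta b g = fst (lamw M i b (w[k := (j, sc (M j) c x)])) - scB c (fst (lamw M i b (w[k := (j, x)])))"
      unfolding g' by (simp add: beta_minus fin_delta fin_fsc beta_fsc beta_delta)
    also have "\<dots> = 0"
    proof (cases "fst (hd w) = i \<and> tl w = []")
      case True
      then have ji: "j = i" using h by (cases w) auto
      have "fst (b (0, sc (M j) c x)) = scB c (fst (b (0,x)))" using op_sc0[OF b] h ji by simp
      then show ?thesis using True by (simp add: fst_lamw_upd[OF h(1-3)])
    next
      case False then show ?thesis by (auto simp: fst_lamw_upd[OF h(1-3)] scB_zero)
    qed
    finally show ?thesis .
  next
    fix w k j j' x y e assume g: "g = fadd (delta (w[k := (j, rac (M j) x e), Suc k := (j', y)]))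
        (fsc (-1) (delta (w[k := (j, x), Suc k := (j', lac (M j') e y)])))"
      and h: "wordv M w" "Suc k < length w" "fst (w ! k) = j" "fst (w ! Suc k) = j'" "x \<in> carr (M j)" "y \<in> carr (M j')"
    have "beta b g = fst (lamw M i b (w[k := (j, rac (M j) x e), Suc k := (j', y)])) - fst (lamw M i b (w[k := (j, x), Suc k := (j', lac (M j') e y)]))"
      unfolding g fadd_eq fsc_m1
      by (simp add: beta_plus beta_minus beta_uminus fin_delta fin_uminus beta_delta)
    also have "\<dots> = 0" using h(2) by (simp add: fst_lamw_long)
    finally show ?thesis .
  qed
next
  case (NSp_add f g)
  have "beta b (fadd f g) = beta b f + beta b g"
    using NSp_fin[OF NSp_add.hyps(1)] NSp_fin[OF NSp_add.hyps(2)] by (simp only: fadd_eq beta_plus)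
  then show ?case using NSp_add.IH by simp
next
  case (NSp_sc f c)
  have "beta b (fsc c f) = scB c (beta b f)" using NSp_fin[OF NSp_sc.hyps] by (simp only: beta_fsc)
  then show ?case using NSp_sc.IH by (simp add: scB_zero)
qed

lemma phi_wordv: assumes a: "a \<in> opL scB (M i)" and w: "wordv M w" and v: "v \<in> spt (phi a w)"
  shows "wordv M v"
proof -
  obtain j0 x0 r where w1: "w = (j0,x0)#r" using w wordv_ne by (cases w) auto
  have x0: "x0 \<in> carr (M j0)" using w w1 by (simp add: wordv_Cons)
  show ?thesis
  proof (cases "j0 = i")
    case False
    let ?c = "fst (a (1, zer (M i)))" and ?e = "snd (a (1, zer (M i)))"
    have "phi a w = delta (wl M ?c w) + delta ((i,?e)#w)"
      unfolding phi_def using lamw_C[of w i M a] False w1 by simp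
    then have "v \<in> spt (delta (wl M ?c w) + delta ((i,?e)#w))" using v by simp
    then have "v = wl M ?c w \<or> v = (i,?e)#w" using spt_delta2 by blast
    then show ?thesis using wordv_wl[OF w] w w1 False op_c[OF a zer_c] by (auto simp: wordv_Cons)
  next
    case True
    show ?thesis
    proof (cases "r = []")
      case True
      have "phi a w = delta [(i, snd (a (0,x0)))]" unfolding phi_def using w1 True \<open>j0 = i\<close> by (simp add: lamw_A)
      then have "v \<in> spt (delta [(i, snd (a (0,x0)))])" using v by simp
      then have "v = [(i, snd (a (0,x0)))]" using spt_delta1 by blast
      then show ?thesis using op_c[OF a] x0 \<open>j0 = i\<close> by (simp add: wordv_Cons)
    next
      case False
      have r: "wordv M r" "fst (hd r) \<noteq> i" using w w1 False \<open>j0 = i\<close> by (auto simp: wordv_Cons)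
      have "phi a w = delta (wl M (fst (a (0,x0))) r) + delta ((i, snd (a (0,x0)))#r)"
        unfolding phi_def using w1 False \<open>j0 = i\<close> by (simp add: lamw_B)
      then have "v \<in> spt (delta (wl M (fst (a (0,x0))) r) + delta ((i, snd (a (0,x0)))#r))" using v by simp
      then have "v = wl M (fst (a (0,x0))) r \<or> v = (i, snd (a (0,x0)))#r" using spt_delta2 by blast
      then show ?thesis using wordv_wl[OF r(1)] r op_c[OF a] x0 \<open>j0 = i\<close> wordv_ne[OF r(1)] by (auto simp: wordv_Cons)
    qed
  qed
qed

lemma FV_T: assumes a: "a \<in> opL scB (M i)" and f: "f \<in> FV M" shows "T a f \<in> FV M"
proof -
  have "finite (spt (T a f))" using f fin_T by (simp add: FV_iff)
  moreover have "\<forall>v\<in>spt (T a f). wordv M v"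
  proof
    fix v assume "v \<in> spt (T a f)"
    then obtain w where "w \<in> spt f" "v \<in> spt (phi a w)" unfolding T_def using spt_lext by blast
    then show "wordv M v" using phi_wordv[OF a] f by (auto simp: FV_iff)
  qed
  ultimately show ?thesis by (simp add: FV_iff)
qed

lemma rs_phi: assumes a: "a \<in> opL scB (M i)" and w: "wordv M w"
  shows "rs i (phi a w) = (if I1 i w then phi a w else 0)"
proof -
  obtain j0 x0 r where w1: "w = (j0,x0)#r" using w wordv_ne by (cases w) auto
  show ?thesis
  proof (cases "j0 = i")
    case False
    let ?c = "fst (a (1, zer (M i)))" and ?e = "snd (a (1, zer (M i)))"
    have "phi a w = delta (wl M ?c w) + delta ((i,?e)#w)"
      unfolding phi_def using lamw_C[of w i M a] False w1 by simp
    moreover have "\<not> I1 i (wl M ?c w)" "\<not> I1 i w" using False w1 by (auto simp: I1_def)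
    moreover have "\<not> I1 i ((i,?e)#w)" using w1 by (simp add: I1_Cons2)
    ultimately show ?thesis by (simp add: rs_plus rs_delta)
  next
    case True
    show ?thesis
    proof (cases "r = []")
      case True
      have "phi a w = delta [(i, snd (a (0,x0)))]" unfolding phi_def using w1 True \<open>j0 = i\<close> by (simp add: lamw_A)
      moreover have "I1 i w" "I1 i [(i, snd (a (0,x0)))]" using w1 True \<open>j0 = i\<close> by (auto simp: I1_def)
      ultimately show ?thesis by (simp add: rs_delta)
    next
      case False
      have r: "wordv M r" "fst (hd r) \<noteq> i" using w w1 False \<open>j0 = i\<close> by (auto simp: wordv_Cons)
      have "phi a w = delta (wl M (fst (a (0,x0))) r) + delta ((i, snd (a (0,x0)))#r)"
        unfolding phi_def using w1 False \<open>j0 = i\<close> by (simp add: lamw_B)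
      moreover have "\<not> I1 i (wl M (fst (a (0,x0))) r)" using r hd_wl[OF wordv_ne[OF r(1)], of M "fst (a (0,x0))"] by (auto simp: I1_def)
      moreover have "\<not> I1 i ((i, snd (a (0,x0)))#r)" "\<not> I1 i w" using w1 False by (auto simp: I1_Cons2')
      ultimately show ?thesis by (simp add: rs_plus rs_delta)
    qed
  qed
qed

lemma rs_T: assumes a: "a \<in> opL scB (M i)" and f: "f \<in> FV M" shows "rs i (T a f) = T a (rs i f)"
proof -
  let ?S = "spt f"
  have fin: "finite ?S" using f by (simp add: FV_iff)
  have 1: "T a f = (\<lambda>v. \<Sum>w\<in>?S. f w * phi a w v)" unfolding T_def by (rule lext_sum[OF fin]) simp
  have 2: "T a (rs i f) = (\<lambda>v. \<Sum>w\<in>?S. rs i f w * phi a w v)" unfolding T_def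
    by (rule lext_sum[OF fin]) (auto simp: spt_def rs_def)
  have 3: "f w * rs i (phi a w) v = rs i f w * phi a w v" if "w \<in> ?S" for w v
  proof -
    have "wordv M w" using that f by (simp add: FV_iff)
    then show ?thesis using rs_phi[OF a] by (simp add: rs_def)
  qed
  show ?thesis
  proof
    fix v
    have "rs i (T a f) v = (\<Sum>w\<in>?S. f w * rs i (phi a w) v)"
      unfolding 1 by (simp add: rs_def)
    also have "\<dots> = (\<Sum>w\<in>?S. rs i f w * phi a w v)" using 3 by (rule sum.cong[OF refl])
    finally show "rs i (T a f) v = T a (rs i f) v" unfolding 2 by simp
  qed
qed

lemma beta_rs: assumes f: "f \<in> FV M" shows "beta a (rs i f) = beta a f"
proof -
  let ?S = "spt f"
  have fin: "finite ?S" using f by (simp add: FV_iff)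
  have 1: "beta a f = (\<Sum>w\<in>?S. scB (f w) (fst (lamw M i a w)))" by (rule beta_sum[OF fin]) simp
  have 2: "beta a (rs i f) = (\<Sum>w\<in>?S. scB (rs i f w) (fst (lamw M i a w)))"
    by (rule beta_sum[OF fin]) (auto simp: spt_def rs_def)
  have 3: "scB (rs i f w) (fst (lamw M i a w)) = scB (f w) (fst (lamw M i a w))" if "w \<in> ?S" for w
  proof -
    have w: "wordv M w" using that f by (simp add: FV_iff)
    then have ne: "w \<noteq> []" by (rule wordv_ne)
    show ?thesis
    proof (cases "I1 i w")
      case True then show ?thesis by (simp add: rs_def)
    next
      case False
      then have "\<not> (fst (hd w) = i \<and> tl w = [])" using ne by (cases w) (auto simp: I1_def)
      then have "fst (lamw M i a w) = 0" using fst_lamw[OF ne, of M i a] by (auto split: if_splits)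
      then show ?thesis using False by (simp add: rs_def scB_zero)
    qed
  qed
  show ?thesis unfolding 1 2 using 3 by (rule sum.cong[OF refl])
qed

end

context fp begin

definition Phi :: "('b \<times> 'm \<Rightarrow> 'b \<times> 'm) \<Rightarrow> 'b \<times> ('i, 'm) fvec \<Rightarrow> 'b \<times> ('i, 'm) fvec" where
  "Phi a p = (fst (a (fst p, zer (M i))) + beta a (snd p), delta [(i, snd (a (fst p, zer (M i))))] + T a (snd p))"

definition peq :: "'b \<times> ('i, 'm) fvec \<Rightarrow> 'b \<times> ('i, 'm) fvec \<Rightarrow> bool" where
  "peq p q \<longleftrightarrow> fst p = fst q \<and> snd p - snd q \<in> NSp M"

definition padd2 :: "'b \<times> ('i, 'm) fvec \<Rightarrow> 'b \<times> ('i, 'm) fvec \<Rightarrow> 'b \<times> ('i, 'm) fvec" where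
  "padd2 p q = (fst p + fst q, snd p + snd q)"

definition psc2 :: "complex \<Rightarrow> 'b \<times> ('i, 'm) fvec \<Rightarrow> 'b \<times> ('i, 'm) fvec" where
  "psc2 c p = (scB c (fst p), fsc c (snd p))"

lemma peq_refl: "peq p p" by (simp add: peq_def NSp_0)
lemma peq_sym: "peq p q \<Longrightarrow> peq q p"
  unfolding peq_def using NSp_uminus[of "snd p - snd q" M] by simp
lemma peq_trans: "peq p q \<Longrightarrow> peq q r \<Longrightarrow> peq p r"
  unfolding peq_def using NSp_plus[of "snd p - snd q" M "snd q - snd r"] by simp
lemma peq_padd2: "peq p p' \<Longrightarrow> peq q q' \<Longrightarrow> peq (padd2 p q) (padd2 p' q')"
  unfolding peq_def padd2_def using NSp_plus[of "snd p - snd p'" M "snd q - snd q'"] by (simp add: algebra_simps)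
lemma peq_psc2: "peq p p' \<Longrightarrow> peq (psc2 c p) (psc2 c p')"
  unfolding peq_def psc2_def using NSp_sc[of "snd p - snd p'" M c] by (simp add: fsc_minus)

lemma FV_padd2: "snd p \<in> FV M \<Longrightarrow> snd q \<in> FV M \<Longrightarrow> snd (padd2 p q) \<in> FV M"
  by (simp add: padd2_def FV_plus)
lemma FV_psc2: "snd p \<in> FV M \<Longrightarrow> snd (psc2 c p) \<in> FV M"
  by (simp add: psc2_def FV_fsc)

lemma wordv_single: "x \<in> carr (M j) \<Longrightarrow> wordv M [(j,x)]" by (simp add: wordv_Cons)

lemma Phi_FV: "a \<in> opL scB (M i) \<Longrightarrow> snd p \<in> FV M \<Longrightarrow> snd (Phi a p) \<in> FV M"
  unfolding Phi_def by (simp add: FV_plus FV_delta wordv_single op_c zer_c FV_T)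

lemma Phi_cong: assumes a: "a \<in> opL scB (M i)" and p: "snd p \<in> FV M" "snd q \<in> FV M" and e: "peq p q"
  shows "peq (Phi a p) (Phi a q)"
proof -
  have fin: "finite (spt (snd p))" "finite (spt (snd q))" using p by (auto simp: FV_iff)
  have n: "snd p - snd q \<in> NSp M" "fst p = fst q" using e by (auto simp: peq_def)
  have "beta a (snd p) - beta a (snd q) = 0" using beta_minus[OF fin, of a, symmetric] beta_NSp[OF a n(1)] by simp
  moreover have "T a (snd p) - T a (snd q) \<in> NSp M" using T_minus[OF fin, of a, symmetric] T_NSp[OF a n(1)] by simp
  ultimately show ?thesis using n(2) unfolding Phi_def peq_def by (simp add: algebra_simps)
qed

lemma G1s: assumes "x \<in> carr (M i)" "y \<in> carr (M i)"
  shows "delta [(i, ad (M i) x y)] - delta [(i,x)] - delta [(i,y)] \<in> NSp M"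
  using G1[OF wordv_single[OF assms(1)], of 0 i x y] assms by simp
lemma G2s: assumes "x \<in> carr (M i)"
  shows "delta [(i, sc (M i) c x)] - fsc c (delta [(i,x)]) \<in> NSp M"
  using G2[OF wordv_single[OF assms(1)], of 0 i x c] assms by simp

lemma Phi_add: assumes a: "a \<in> opL scB (M i)" and p: "snd p \<in> FV M" "snd q \<in> FV M"
  shows "peq (Phi a (padd2 p q)) (padd2 (Phi a p) (Phi a q))"
proof -
  have fin: "finite (spt (snd p))" "finite (spt (snd q))" using p by (auto simp: FV_iff)
  let ?z = "zer (M i)"
  have e: "a (fst p + fst q, ?z) = (fst (a (fst p, ?z)) + fst (a (fst q, ?z)), ad (M i) (snd (a (fst p, ?z))) (snd (a (fst q, ?z))))"
    using op_add[OF a zer_c zer_c, of "fst p" "fst q"] by (simp add: ad_zz)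
  have g: "delta [(i, ad (M i) (snd (a (fst p, ?z))) (snd (a (fst q, ?z))))] - delta [(i, snd (a (fst p, ?z)))] - delta [(i, snd (a (fst q, ?z)))] \<in> NSp M"
    by (rule G1s) (simp_all add: op_c[OF a] zer_c)
  show ?thesis unfolding Phi_def padd2_def peq_def
    using g by (simp add: e beta_plus[OF fin] T_plus[OF fin] algebra_simps)
qed

lemma Phi_sc: assumes a: "a \<in> opL scB (M i)" and p: "snd p \<in> FV M"
  shows "peq (Phi a (psc2 c p)) (psc2 c (Phi a p))"
proof -
  have fin: "finite (spt (snd p))" using p by (auto simp: FV_iff)
  let ?z = "zer (M i)"
  have e: "a (scB c (fst p), ?z) = (scB c (fst (a (fst p, ?z))), sc (M i) c (snd (a (fst p, ?z))))"
    using op_sc[OF a zer_c, of c "fst p"] by (simp add: sc_zer)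
  have g: "delta [(i, sc (M i) c (snd (a (fst p, ?z))))] - fsc c (delta [(i, snd (a (fst p, ?z)))]) \<in> NSp M"
    by (rule G2s) (simp add: op_c[OF a] zer_c)
  show ?thesis unfolding Phi_def psc2_def peq_def
    using g by (simp add: e beta_fsc[OF fin] T_fsc[OF fin] fsc_add scB_add algebra_simps)
qed

definition iota :: "'b \<times> 'm \<Rightarrow> 'b \<times> ('i, 'm) fvec" where
  "iota p = (fst p, delta [(i, snd p)])"

lemma Phi_iota: assumes a: "a \<in> opL scB (M i)" and x: "x \<in> carr (M i)"
  shows "peq (Phi a (b0, delta [(i,x)])) (iota (a (b0, x)))"
proof -
  let ?z = "zer (M i)"
  have e: "a (b0, x) = (fst (a (b0, ?z)) + fst (a (0, x)), ad (M i) (snd (a (b0, ?z))) (snd (a (0, x))))"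
    using op_add[OF a zer_c x, of b0 0] by (simp add: ad_zer x)
  have g: "delta [(i, ad (M i) (snd (a (b0, ?z))) (snd (a (0, x))))] - delta [(i, snd (a (b0, ?z)))] - delta [(i, snd (a (0, x)))] \<in> NSp M"
    by (rule G1s) (simp_all add: op_c[OF a] zer_c x)
  have "delta [(i, snd (a (b0, ?z)))] + delta [(i, snd (a (0, x)))] - delta [(i, ad (M i) (snd (a (b0, ?z))) (snd (a (0, x))))] \<in> NSp M"
    using NSp_uminus[OF g] by (simp add: algebra_simps)
  then show ?thesis unfolding Phi_def iota_def peq_def
    by (simp add: e beta_delta T_delta phi_def lamw_A)
qed

definition good :: "('b \<times> ('i, 'm) fvec \<Rightarrow> 'b \<times> ('i, 'm) fvec) \<Rightarrow> bool" where
  "good \<Psi> \<longleftrightarrow> (\<forall>p. snd p \<in> FV M \<longrightarrow> snd (\<Psi> p) \<in> FV M) \<and>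
     (\<forall>p q. snd p \<in> FV M \<longrightarrow> snd q \<in> FV M \<longrightarrow> peq p q \<longrightarrow> peq (\<Psi> p) (\<Psi> q)) \<and>
     (\<forall>p q. snd p \<in> FV M \<longrightarrow> snd q \<in> FV M \<longrightarrow> peq (\<Psi> (padd2 p q)) (padd2 (\<Psi> p) (\<Psi> q))) \<and>
     (\<forall>c p. snd p \<in> FV M \<longrightarrow> peq (\<Psi> (psc2 c p)) (psc2 c (\<Psi> p)))"

lemma good_Phi: "a \<in> opL scB (M i) \<Longrightarrow> good (Phi a)"
  unfolding good_def using Phi_FV Phi_cong Phi_add Phi_sc by blast

lemma good_FV: "good \<Psi> \<Longrightarrow> snd p \<in> FV M \<Longrightarrow> snd (\<Psi> p) \<in> FV M"
  unfolding good_def by blast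
lemma good_cong: "good \<Psi> \<Longrightarrow> snd p \<in> FV M \<Longrightarrow> snd q \<in> FV M \<Longrightarrow> peq p q \<Longrightarrow> peq (\<Psi> p) (\<Psi> q)"
  unfolding good_def by blast
lemma good_add: "good \<Psi> \<Longrightarrow> snd p \<in> FV M \<Longrightarrow> snd q \<in> FV M \<Longrightarrow> peq (\<Psi> (padd2 p q)) (padd2 (\<Psi> p) (\<Psi> q))"
  unfolding good_def by blast
lemma good_sc: "good \<Psi> \<Longrightarrow> snd p \<in> FV M \<Longrightarrow> peq (\<Psi> (psc2 c p)) (psc2 c (\<Psi> p))"
  unfolding good_def by blast

lemma good_comp: assumes g1: "good \<Psi>1" and g2: "good \<Psi>2" shows "good (\<Psi>1 \<circ> \<Psi>2)"
  unfolding good_def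
proof (intro conjI allI impI)
  fix p :: "'b \<times> ('i, 'm) fvec" assume h: "snd p \<in> FV M"
  show "snd ((\<Psi>1 \<circ> \<Psi>2) p) \<in> FV M" using good_FV[OF g1 good_FV[OF g2 h]] by simp
next
  fix p q :: "'b \<times> ('i, 'm) fvec" assume h: "snd p \<in> FV M" "snd q \<in> FV M" "peq p q"
  show "peq ((\<Psi>1 \<circ> \<Psi>2) p) ((\<Psi>1 \<circ> \<Psi>2) q)"
    using good_cong[OF g1 good_FV[OF g2 h(1)] good_FV[OF g2 h(2)] good_cong[OF g2 h]] by simp
next
  fix p q :: "'b \<times> ('i, 'm) fvec" assume h: "snd p \<in> FV M" "snd q \<in> FV M"
  have 1: "peq (\<Psi>2 (padd2 p q)) (padd2 (\<Psi>2 p) (\<Psi>2 q))" using good_add[OF g2 h] .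
  have f: "snd (\<Psi>2 (padd2 p q)) \<in> FV M" "snd (\<Psi>2 p) \<in> FV M" "snd (\<Psi>2 q) \<in> FV M"
    using good_FV[OF g2] h FV_padd2 by blast+
  have 2: "peq (\<Psi>1 (\<Psi>2 (padd2 p q))) (\<Psi>1 (padd2 (\<Psi>2 p) (\<Psi>2 q)))"
    using good_cong[OF g1 f(1) FV_padd2[OF f(2,3)] 1] .
  have 3: "peq (\<Psi>1 (padd2 (\<Psi>2 p) (\<Psi>2 q))) (padd2 (\<Psi>1 (\<Psi>2 p)) (\<Psi>1 (\<Psi>2 q)))"
    using good_add[OF g1 f(2,3)] .
  show "peq ((\<Psi>1 \<circ> \<Psi>2) (padd2 p q)) (padd2 ((\<Psi>1 \<circ> \<Psi>2) p) ((\<Psi>1 \<circ> \<Psi>2) q))"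
    using peq_trans[OF 2 3] by simp
next
  fix c and p :: "'b \<times> ('i, 'm) fvec" assume h: "snd p \<in> FV M"
  have 1: "peq (\<Psi>2 (psc2 c p)) (psc2 c (\<Psi>2 p))" using good_sc[OF g2 h] .
  have f: "snd (\<Psi>2 (psc2 c p)) \<in> FV M" "snd (\<Psi>2 p) \<in> FV M"
    using good_FV[OF g2] h FV_psc2 by blast+
  have 2: "peq (\<Psi>1 (\<Psi>2 (psc2 c p))) (\<Psi>1 (psc2 c (\<Psi>2 p)))"
    using good_cong[OF g1 f(1) FV_psc2[OF f(2)] 1] .
  have 3: "peq (\<Psi>1 (psc2 c (\<Psi>2 p))) (psc2 c (\<Psi>1 (\<Psi>2 p)))"
    using good_sc[OF g1 f(2)] .
  show "peq ((\<Psi>1 \<circ> \<Psi>2) (psc2 c p)) (psc2 c ((\<Psi>1 \<circ> \<Psi>2) p))"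
    using peq_trans[OF 2 3] by simp
qed

lemma zdelta: "0 - delta [(i, zer (M i))] \<in> NSp M"
  using G1s[OF zer_c zer_c] by (simp add: ad_zz)

lemma V_induct:
  assumes g1: "good \<Psi>1" and g2: "good \<Psi>2"
    and ag: "\<And>b0 x. x \<in> carr (M i) \<Longrightarrow> peq (\<Psi>1 (b0, delta [(i,x)])) (\<Psi>2 (b0, delta [(i,x)]))"
    and S: "finite S"
  shows "\<forall>g. g \<in> FV M \<and> spt g \<subseteq> S \<and> (\<forall>w\<in>spt g. I1 i w) \<longrightarrow> (\<forall>b0. peq (\<Psi>1 (b0, g)) (\<Psi>2 (b0, g)))"
  using S
proof (induction S rule: finite_induct)
  case empty
  show ?case
  proof (intro allI impI)
    fix g b0 assume h: "g \<in> FV M \<and> spt g \<subseteq> {} \<and> (\<forall>w\<in>spt g. I1 i w)"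
    then have g0: "g = 0" by (auto simp: spt_def fun_eq_iff)
    have fz: "delta [(i, zer (M i))] \<in> FV M" by (simp add: FV_delta wordv_single zer_c)
    have e: "peq (b0, g) (b0, delta [(i, zer (M i))])" using zdelta g0 by (simp add: peq_def)
    have 1: "peq (\<Psi>1 (b0, g)) (\<Psi>1 (b0, delta [(i, zer (M i))]))" using good_cong[OF g1 _ _ e] h fz by simp
    have 2: "peq (\<Psi>2 (b0, delta [(i, zer (M i))])) (\<Psi>2 (b0, g))" using good_cong[OF g2 _ _ peq_sym[OF e]] h fz by simp
    show "peq (\<Psi>1 (b0, g)) (\<Psi>2 (b0, g))" using peq_trans[OF peq_trans[OF 1 ag[OF zer_c]] 2] .
  qed
next
  case (insert w S)
  show ?case
  proof (intro allI impI)
    fix g b0 assume h: "g \<in> FV M \<and> spt g \<subseteq> insert w S \<and> (\<forall>w\<in>spt g. I1 i w)"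
    let ?g' = "g(w := 0)"
    have g'h: "?g' \<in> FV M \<and> spt ?g' \<subseteq> S \<and> (\<forall>w\<in>spt ?g'. I1 i w)"
      using h by (auto simp: FV_iff spt_def intro: finite_subset[of _ "{w. g w \<noteq> 0}"])
    have IH: "peq (\<Psi>1 (b0, ?g')) (\<Psi>2 (b0, ?g'))" for b0 using insert.IH g'h by blast
    show "peq (\<Psi>1 (b0, g)) (\<Psi>2 (b0, g))"
    proof (cases "g w = 0")
      case True
      then have "g = ?g'" by auto
      then show ?thesis using IH by metis
    next
      case False
      then have "w \<in> spt g" by (simp add: spt_def)
      then have wI: "I1 i w" "wordv M w" using h by (auto simp: FV_iff)
      then obtain x where w: "w = [(i,x)]" and x: "x \<in> carr (M i)"
        by (cases w) (auto simp: I1_def wordv_Cons)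
      let ?c = "g w" and ?q = "(0::'b, delta [(i,x)])"
      have dec: "(b0, g) = padd2 (b0, ?g') (psc2 ?c ?q)"
        unfolding padd2_def psc2_def using w by (simp add: scB_zero fsc_def delta_def fun_eq_iff)
      have fq: "snd ?q \<in> FV M" by (simp add: FV_delta wordv_single x)
      have fg': "snd (b0, ?g') \<in> FV M" using g'h by simp
      have fcq: "snd (psc2 ?c ?q) \<in> FV M" using FV_psc2[OF fq] .
      have E: "peq (\<Psi> (b0, g)) (padd2 (\<Psi> (b0, ?g')) (psc2 ?c (\<Psi> ?q)))" if gd: "good \<Psi>" for \<Psi>
      proof -
        have 1: "peq (\<Psi> (b0, g)) (padd2 (\<Psi> (b0, ?g')) (\<Psi> (psc2 ?c ?q)))"
          unfolding dec using good_add[OF gd fg' fcq] .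
        have 2: "peq (\<Psi> (psc2 ?c ?q)) (psc2 ?c (\<Psi> ?q))" using good_sc[OF gd fq] .
        show ?thesis using peq_trans[OF 1 peq_padd2[OF peq_refl 2]] .
      qed
      have "peq (padd2 (\<Psi>1 (b0, ?g')) (psc2 ?c (\<Psi>1 ?q))) (padd2 (\<Psi>2 (b0, ?g')) (psc2 ?c (\<Psi>2 ?q)))"
        by (rule peq_padd2[OF IH peq_psc2[OF ag[OF x]]])
      then show ?thesis using E[OF g1] peq_sym[OF E[OF g2]] peq_trans by blast
    qed
  qed
qed

end

lemma cls_self: "f \<in> FV M \<Longrightarrow> f \<in> cls M f"
  unfolding cls_def using NSp_zero[of M] by (simp add: fadd_def fsc_def)

lemma cls_mem: "g \<in> cls M f \<longleftrightarrow> g \<in> FV M \<and> g - f \<in> NSp M"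
  unfolding cls_def by (simp add: fadd_eq fsc_m1)

lemma rep_cls: assumes "f \<in> FV M" shows "rep (cls M f) \<in> FV M" "rep (cls M f) - f \<in> NSp M"
proof -
  have "rep (cls M f) \<in> cls M f" unfolding rep_def using cls_self[OF assms] by (rule someI[where x=f])
  then show "rep (cls M f) \<in> FV M" "rep (cls M f) - f \<in> NSp M" by (auto simp: cls_mem)
qed

lemma cls_eq: assumes "F \<in> FV M" "G \<in> FV M" "F - G \<in> NSp M" shows "cls M F = cls M G"
proof -
  have "h - F \<in> NSp M \<longleftrightarrow> h - G \<in> NSp M" for h
  proof
    assume "h - F \<in> NSp M" then show "h - G \<in> NSp M" using NSp_plus[OF _ assms(3)] by fastforce
  next
    assume "h - G \<in> NSp M" then show "h - F \<in> NSp M" using NSp_minus[OF _ assms(3)] by fastforce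
  qed
  then show ?thesis by (auto simp: cls_mem)
qed

lemma Xc_rep: assumes "x \<in> Xc M" shows "rep (snd x) \<in> FV M" "x = (fst x, cls M (rep (snd x)))"
proof -
  obtain f where f: "f \<in> FV M" "snd x = cls M f" using assms by (auto simp: Xc_def Xo_def)
  show "rep (snd x) \<in> FV M" using rep_cls(1)[OF f(1)] f(2) by simp
  have "cls M (rep (snd x)) = cls M f" using cls_eq[OF rep_cls(1)[OF f(1)] f(1) rep_cls(2)[OF f(1)]] f(2) by simp
  then show "x = (fst x, cls M (rep (snd x)))" using f(2) by (cases x) simp
qed

lemma Xc_I: "f \<in> FV M \<Longrightarrow> (b, cls M f) \<in> Xc M" by (simp add: Xc_def Xo_def)

context fp begin

definition push :: "'b \<times> ('i, 'm) fvec \<Rightarrow> 'b \<times> ('i, 'm) fvec set" where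
  "push p = (fst p, cls M (snd p))"

lemma push_eq: "snd p \<in> FV M \<Longrightarrow> snd q \<in> FV M \<Longrightarrow> peq p q \<Longrightarrow> push p = push q"
  unfolding push_def peq_def using cls_eq by (cases p, cases q) auto

lemma L_eq: assumes a: "a \<in> opL scB (M i)" and f: "f \<in> FV M"
  shows "lam scB M i a (b0, cls M f) = push (Phi a (b0, f))"
proof -
  let ?f' = "rep (cls M f)"
  have r: "?f' \<in> FV M" "?f' - f \<in> NSp M" using rep_cls[OF f] by auto
  have "lam scB M i a (b0, cls M f) = push (Phi a (b0, ?f'))"
    unfolding lam_def using Xc_I[OF f, of b0]
    by (simp add: Let_def split_def Phi_def push_def beta_def spt_def T_def lext_def phi_def fadd_eq)
  also have "\<dots> = push (Phi a (b0, f))"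
    by (rule push_eq) (use Phi_FV[OF a] Phi_cong[OF a] r f in \<open>auto simp: peq_def\<close>)
  finally show ?thesis .
qed

lemma Q_eq: assumes f: "f \<in> FV M" shows "Pj M i (b0, cls M f) = (b0, cls M (rs i f))"
proof -
  let ?f' = "rep (cls M f)"
  have r: "?f' \<in> FV M" "?f' - f \<in> NSp M" using rep_cls[OF f] by auto
  have "Pj M i (b0, cls M f) = (b0, cls M (rs i ?f'))"
    unfolding Pj_def using Xc_I[OF f, of b0] by (simp add: rs_def I1_def)
  also have "cls M (rs i ?f') = cls M (rs i f)"
    by (rule cls_eq) (use FV_rs r f rs_NSp[OF r(2)] in \<open>auto simp: rs_minus\<close>)
  finally show ?thesis .
qed

lemma L_X: assumes a: "a \<in> opL scB (M i)" and x: "x \<in> Xc M" shows "lam scB M i a x \<in> Xc M"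
proof -
  have "lam scB M i a x = push (Phi a (fst x, rep (snd x)))" using L_eq[OF a Xc_rep(1)[OF x]] Xc_rep(2)[OF x] by metis
  then show ?thesis using Phi_FV[OF a, of "(fst x, rep (snd x))"] Xc_rep(1)[OF x] by (simp add: push_def Xc_I)
qed

lemma Q_X: assumes x: "x \<in> Xc M" shows "Pj M i x \<in> Xc M"
  using Q_eq[OF Xc_rep(1)[OF x], of "fst x"] Xc_rep[OF x] FV_rs Xc_I by metis

lemma QQ: assumes x: "x \<in> Xc M" shows "Pj M i (Pj M i x) = Pj M i x"
proof -
  have f: "rep (snd x) \<in> FV M" using Xc_rep[OF x] by simp
  have "Pj M i x = (fst x, cls M (rs i (rep (snd x))))" using Q_eq[OF f, of "fst x"] Xc_rep(2)[OF x] by metis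
  then show ?thesis using Q_eq[OF FV_rs[OF f], of "fst x"] by (simp add: rs_rs)
qed

lemma QL: assumes a: "a \<in> opL scB (M i)" and x: "x \<in> Xc M"
  shows "Pj M i (lam scB M i a x) = lam scB M i a (Pj M i x)"
proof -
  let ?f = "rep (snd x)" and ?b0 = "fst x" and ?z = "zer (M i)"
  have f: "?f \<in> FV M" using Xc_rep[OF x] by simp
  have xe: "x = (?b0, cls M ?f)" using Xc_rep[OF x] by simp
  have I: "I1 i [(i, snd (a (?b0, ?z)))]" by (simp add: I1_def)
  have F: "delta [(i, snd (a (?b0, ?z)))] + T a ?f \<in> FV M" using Phi_FV[OF a, of "(?b0, ?f)"] f by (simp add: Phi_def)
  have "Pj M i (lam scB M i a x) = Pj M i (push (Phi a (?b0, ?f)))" using L_eq[OF a f] xe by metis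
  also have "\<dots> = (fst (a (?b0, ?z)) + beta a ?f, cls M (rs i (delta [(i, snd (a (?b0, ?z)))] + T a ?f)))"
    unfolding push_def Phi_def using Q_eq[OF F] by simp
  also have "\<dots> = (fst (a (?b0, ?z)) + beta a (rs i ?f), cls M (delta [(i, snd (a (?b0, ?z)))] + T a (rs i ?f)))"
    using I by (simp add: rs_plus rs_delta rs_T[OF a f] beta_rs[OF f])
  also have "\<dots> = push (Phi a (?b0, rs i ?f))" by (simp add: push_def Phi_def)
  also have "\<dots> = lam scB M i a (?b0, cls M (rs i ?f))" using L_eq[OF a FV_rs[OF f]] by simp
  also have "\<dots> = lam scB M i a (Pj M i x)" using Q_eq[OF f] xe by metis
  finally show ?thesis .
qed

lemma pcar_padd: "p \<in> pcar (M i) \<Longrightarrow> q \<in> pcar (M i) \<Longrightarrow> padd (M i) p q \<in> pcar (M i)"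
  by (auto simp: pcar_def padd_def ad_c)
lemma pcar_psc: "p \<in> pcar (M i) \<Longrightarrow> psc scB (M i) c p \<in> pcar (M i)"
  by (auto simp: pcar_def psc_def sc_c)
lemma pcar_plac: "p \<in> pcar (M i) \<Longrightarrow> plac (M i) b p \<in> pcar (M i)"
  by (auto simp: pcar_def plac_def lac_c)
lemma pcar_prac: "p \<in> pcar (M i) \<Longrightarrow> prac (M i) p b \<in> pcar (M i)"
  by (auto simp: pcar_def prac_def rac_c)

lemma opL_pi: "a \<in> opL scB (M i) \<Longrightarrow> p \<in> pcar (M i) \<Longrightarrow> a p \<in> pcar (M i)"
  by (auto simp: opL_def)
lemma opL_padd: "a \<in> opL scB (M i) \<Longrightarrow> p \<in> pcar (M i) \<Longrightarrow> q \<in> pcar (M i) \<Longrightarrow> a (padd (M i) p q) = padd (M i) (a p) (a q)"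
  by (auto simp: opL_def)
lemma opL_psc: "a \<in> opL scB (M i) \<Longrightarrow> p \<in> pcar (M i) \<Longrightarrow> a (psc scB (M i) c p) = psc scB (M i) c (a p)"
  by (auto simp: opL_def)
lemma opL_plac: "a \<in> opL scB (M i) \<Longrightarrow> p \<in> pcar (M i) \<Longrightarrow> a (plac (M i) c p) = plac (M i) c (a p)"
  by (auto simp: opL_def)
lemma opL_prac: "a \<in> opL scB (M i) \<Longrightarrow> p \<in> pcar (M i) \<Longrightarrow> a (prac (M i) p c) = prac (M i) (a p) c"
  by (auto simp: opL_def)

lemma comp_opL: assumes a: "a \<in> opL scB (M i)" and b: "b \<in> opL scB (M i)"
  shows "compose (pcar (M i)) a b \<in> opL scB (M i)"
proof -
  have A: "a \<in> pcar (M i) \<rightarrow> pcar (M i)" "b \<in> pcar (M i) \<rightarrow> pcar (M i)" using a b by (auto simp: opL_def)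
  show ?thesis unfolding opL_def
  proof (intro CollectI conjI ballI allI)
    show "compose (pcar (M i)) a b \<in> extensional (pcar (M i))" by simp
    show "compose (pcar (M i)) a b \<in> pcar (M i) \<rightarrow> pcar (M i)" using funcset_compose[OF A(2) A(1)] .
  next
    fix p q assume pq: "p \<in> pcar (M i)" "q \<in> pcar (M i)"
    show "compose (pcar (M i)) a b (padd (M i) p q) = padd (M i) (compose (pcar (M i)) a b p) (compose (pcar (M i)) a b q)"
      using pq by (simp add: compose_eq pcar_padd opL_padd[OF b] opL_padd[OF a] opL_pi[OF b])
  next
    fix c p assume p: "p \<in> pcar (M i)"
    show "compose (pcar (M i)) a b (psc scB (M i) c p) = psc scB (M i) c (compose (pcar (M i)) a b p)"
      using p by (simp add: compose_eq pcar_psc opL_psc[OF b] opL_psc[OF a] opL_pi[OF b])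
  next
    fix c p assume p: "p \<in> pcar (M i)"
    show "compose (pcar (M i)) a b (plac (M i) c p) = plac (M i) c (compose (pcar (M i)) a b p)"
      using p by (simp add: compose_eq pcar_plac opL_plac[OF b] opL_plac[OF a] opL_pi[OF b])
  next
    fix c p assume p: "p \<in> pcar (M i)"
    show "compose (pcar (M i)) a b (prac (M i) p c) = prac (M i) (compose (pcar (M i)) a b p) c"
      using p by (simp add: compose_eq pcar_prac opL_prac[OF b] opL_prac[OF a] opL_pi[OF b])
  qed
qed

lemma op_pcar: "a \<in> opL scB (M i) \<Longrightarrow> x \<in> carr (M i) \<Longrightarrow> a (b0, x) = (fst (a (b0,x)), snd (a (b0,x)))" by simp

lemma MULT: assumes a: "a \<in> opL scB (M i)" and b: "b \<in> opL scB (M i)"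
    and g: "g \<in> FV M" "\<forall>w\<in>spt g. I1 i w"
  shows "peq (Phi a (Phi b (b0, g))) (Phi (compose (pcar (M i)) a b) (b0, g))"
proof -
  let ?c = "compose (pcar (M i)) a b"
  have c: "?c \<in> opL scB (M i)" by (rule comp_opL[OF a b])
  have ag: "peq ((Phi a \<circ> Phi b) (b0', delta [(i,x)])) (Phi ?c (b0', delta [(i,x)]))" if hx: "x \<in> carr (M i)" for b0' x
  proof -
    let ?p = "b (b0', x)"
    have sx: "snd ?p \<in> carr (M i)" using op_c[OF b hx] .
    have 1: "peq (Phi b (b0', delta [(i,x)])) (iota ?p)" by (rule Phi_iota[OF b hx])
    have fi: "snd (iota ?p) \<in> FV M" by (simp add: iota_def FV_delta wordv_single sx)
    have fd: "snd (b0', delta [(i,x)]) \<in> FV M" by (simp add: FV_delta wordv_single hx)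
    have 2: "peq (Phi a (Phi b (b0', delta [(i,x)]))) (Phi a (iota ?p))"
      by (rule Phi_cong[OF a Phi_FV[OF b fd] fi 1])
    have 3: "peq (Phi a (iota ?p)) (iota (a ?p))"
      using Phi_iota[OF a sx, of "fst ?p"] by (simp add: iota_def)
    have 4: "peq (Phi ?c (b0', delta [(i,x)])) (iota (?c (b0', x)))" by (rule Phi_iota[OF c hx])
    have "?c (b0', x) = a ?p" using hx by (simp add: compose_eq pcar_def)
    then have h4b: "peq (Phi ?c (b0', delta [(i,x)])) (iota (a ?p))" using 4 by simp
    show ?thesis using peq_trans[OF peq_trans[OF 2 3] peq_sym[OF h4b]] by simp
  qed
  have fin: "finite (spt g)" using g by (simp add: FV_iff)
  have "\<forall>g'. g' \<in> FV M \<and> spt g' \<subseteq> spt g \<and> (\<forall>w\<in>spt g'. I1 i w) \<longrightarrow> (\<forall>b0. peq ((Phi a \<circ> Phi b) (b0, g')) (Phi ?c (b0, g')))"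
    by (rule V_induct[OF good_comp[OF good_Phi[OF a] good_Phi[OF b]] good_Phi[OF c] ag fin])
  then show ?thesis using g by simp
qed

lemma LL: assumes a: "a \<in> opL scB (M i)" and b: "b \<in> opL scB (M i)" and x: "x \<in> Xc M"
  shows "lam scB M i a (lam scB M i b (Pj M i x)) = lam scB M i (compose (pcar (M i)) a b) (Pj M i x)"
proof -
  let ?f = "rep (snd x)" and ?b0 = "fst x" and ?c = "compose (pcar (M i)) a b"
  have f: "?f \<in> FV M" using Xc_rep[OF x] by simp
  have xe: "x = (?b0, cls M ?f)" using Xc_rep[OF x] by simp
  let ?g = "rs i ?f"
  have g: "?g \<in> FV M" "\<forall>w\<in>spt ?g. I1 i w" using FV_rs[OF f] by (auto simp: rs_def spt_def)
  have Q: "Pj M i x = (?b0, cls M ?g)" using Q_eq[OF f] xe by metis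
  have P: "snd (Phi b (?b0, ?g)) \<in> FV M" using Phi_FV[OF b] g by simp
  have "lam scB M i a (lam scB M i b (Pj M i x)) = lam scB M i a (push (Phi b (?b0, ?g)))"
    unfolding Q using L_eq[OF b g(1)] by simp
  also have "\<dots> = push (Phi a (Phi b (?b0, ?g)))"
  proof -
    have "push (Phi b (?b0, ?g)) = (fst (Phi b (?b0,?g)), cls M (snd (Phi b (?b0,?g))))" by (simp add: push_def)
    then show ?thesis using L_eq[OF a P, of "fst (Phi b (?b0, ?g))"] by simp
  qed
  also have "\<dots> = push (Phi ?c (?b0, ?g))"
    by (rule push_eq[OF Phi_FV[OF a P] Phi_FV[OF comp_opL[OF a b]] MULT[OF a b g]]) (use g in simp)
  also have "\<dots> = lam scB M i ?c (Pj M i x)" unfolding Q using L_eq[OF comp_opL[OF a b] g(1)] by simp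
  finally show ?thesis .
qed

end

definition ap :: "('x \<Rightarrow> 'x) list \<Rightarrow> 'x \<Rightarrow> 'x" where
  "ap as x = foldr (\<lambda>u y. u y) as x"

lemma ap_Nil[simp]: "ap [] x = x" by (simp add: ap_def)
lemma ap_Cons[simp]: "ap (u # as) x = u (ap as x)" by (simp add: ap_def)

lemma oprod_ap: "x \<in> X \<Longrightarrow> oprod X as x = ap as x"
  by (induction as) (simp_all add: oprod_def compose_eq)

lemma oprod_ext: "oprod X as \<in> extensional X"
  by (cases as) (simp_all add: oprod_def)

context fp begin

lemma AB_form: assumes a: "a \<in> opL scB (M i)"
  shows "compose (Xc M) (Pj M i) (compose (Xc M) (lam scB M i a) (Pj M i)) = restrict (\<lambda>x. lam scB M i a (Pj M i x)) (Xc M)"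
proof
  fix x
  show "compose (Xc M) (Pj M i) (compose (Xc M) (lam scB M i a) (Pj M i)) x = restrict (\<lambda>x. lam scB M i a (Pj M i x)) (Xc M) x"
  proof (cases "x \<in> Xc M")
    case True
    then show ?thesis using QL[OF a Q_X[OF True]] QQ[OF True] by (simp add: compose_eq)
  next
    case False then show ?thesis by (simp add: compose_def)
  qed
qed

lemma S_cases: assumes "u \<in> AF scB M i \<union> AB scB M i"
  shows "\<exists>a\<in>opL scB (M i). (u \<in> AF scB M i \<and> u = lam scB M i a) \<or>
      (u \<in> AB scB M i \<and> (\<forall>x\<in>Xc M. u x = lam scB M i a (Pj M i x)))"
  using assms
proof
  assume "u \<in> AF scB M i" then show ?thesis by (auto simp: AF_def)
next
  assume u: "u \<in> AB scB M i"
  then obtain a where a: "a \<in> opL scB (M i)" "u = compose (Xc M) (Pj M i) (compose (Xc M) (lam scB M i a) (Pj M i))"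
    by (auto simp: AB_def)
  then show ?thesis using AB_form[OF a(1)] u by auto
qed

lemma S_X: assumes "u \<in> AF scB M i \<union> AB scB M i" "x \<in> Xc M" shows "u x \<in> Xc M"
  using S_cases[OF assms(1)] assms(2) L_X Q_X by metis

lemma ap_X: "set as \<subseteq> AF scB M i \<union> AB scB M i \<Longrightarrow> x \<in> Xc M \<Longrightarrow> ap as x \<in> Xc M"
  by (induction as) (auto intro: S_X)

lemma claimF: "set us \<subseteq> AF scB M i \<Longrightarrow> b \<in> opL scB (M i) \<Longrightarrow>
   \<exists>c\<in>opL scB (M i). \<forall>x\<in>Xc M. lam scB M i b (Pj M i (ap us x)) = lam scB M i c (Pj M i x)"
proof (induction us arbitrary: b)
  case Nil then show ?case by auto
next
  case (Cons r us)
  obtain d where d: "d \<in> opL scB (M i)" "r = lam scB M i d" using Cons.prems(1) by (auto simp: AF_def)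
  let ?bd = "compose (pcar (M i)) b d"
  have bd: "?bd \<in> opL scB (M i)" using comp_opL[OF Cons.prems(2) d(1)] .
  obtain c where c: "c \<in> opL scB (M i)" "\<forall>x\<in>Xc M. lam scB M i ?bd (Pj M i (ap us x)) = lam scB M i c (Pj M i x)"
    using Cons.IH[OF _ bd] Cons.prems(1) by auto
  have "lam scB M i b (Pj M i (ap (r # us) x)) = lam scB M i c (Pj M i x)" if x: "x \<in> Xc M" for x
  proof -
    have y: "ap us x \<in> Xc M" using ap_X[OF _ x, of us] Cons.prems(1) by auto
    have "lam scB M i b (Pj M i (ap (r # us) x)) = lam scB M i b (lam scB M i d (Pj M i (ap us x)))"
      using QL[OF d(1) y] d(2) by simp
    also have "\<dots> = lam scB M i ?bd (Pj M i (ap us x))" using LL[OF Cons.prems(2) d(1) y] .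
    also have "\<dots> = lam scB M i c (Pj M i x)" using c(2) x by simp
    finally show ?thesis .
  qed
  then show ?case using c(1) by blast
qed

lemma claimB: "as \<noteq> [] \<Longrightarrow> set as \<subseteq> AF scB M i \<union> AB scB M i \<Longrightarrow> (\<exists>u\<in>set as. u \<in> AB scB M i) \<Longrightarrow>
   \<exists>c\<in>opL scB (M i). \<forall>x\<in>Xc M. ap as x = lam scB M i c (Pj M i x)"
proof (induction as)
  case Nil then show ?case by simp
next
  case (Cons u rest)
  have uS: "u \<in> AF scB M i \<union> AB scB M i" using Cons.prems by simp
  show ?case
  proof (cases "\<exists>u'\<in>set rest. u' \<in> AB scB M i")
    case True
    then have "rest \<noteq> []" by auto
    then obtain c where c: "c \<in> opL scB (M i)" "\<forall>x\<in>Xc M. ap rest x = lam scB M i c (Pj M i x)"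
      using Cons.IH Cons.prems True by auto
    obtain d where d: "d \<in> opL scB (M i)" "(u = lam scB M i d) \<or> (\<forall>x\<in>Xc M. u x = lam scB M i d (Pj M i x))"
      using S_cases[OF uS] by blast
    have "ap (u # rest) x = lam scB M i (compose (pcar (M i)) d c) (Pj M i x)" if x: "x \<in> Xc M" for x
    proof -
      have y: "lam scB M i c (Pj M i x) \<in> Xc M" using L_X[OF c(1) Q_X[OF x]] .
      have e: "ap (u # rest) x = u (lam scB M i c (Pj M i x))" using c(2) x by simp
      from d(2) show ?thesis
      proof
        assume "u = lam scB M i d"
        then show ?thesis using e LL[OF d(1) c(1) x] by simp
      next
        assume "\<forall>x\<in>Xc M. u x = lam scB M i d (Pj M i x)"
        then have "u (lam scB M i c (Pj M i x)) = lam scB M i d (Pj M i (lam scB M i c (Pj M i x)))" using y by blast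
        also have "\<dots> = lam scB M i d (lam scB M i c (Pj M i (Pj M i x)))" using QL[OF c(1) Q_X[OF x]] by simp
        also have "\<dots> = lam scB M i d (lam scB M i c (Pj M i x))" using QQ[OF x] by simp
        also have "\<dots> = lam scB M i (compose (pcar (M i)) d c) (Pj M i x)" using LL[OF d(1) c(1) x] .
        finally show ?thesis using e by simp
      qed
    qed
    then show ?thesis using comp_opL[OF d(1) c(1)] by blast
  next
    case False
    then have uB: "u \<in> AB scB M i" using Cons.prems(3) by auto
    have rF: "set rest \<subseteq> AF scB M i" using False Cons.prems(2) by auto
    obtain d where d: "d \<in> opL scB (M i)" "\<forall>x\<in>Xc M. u x = lam scB M i d (Pj M i x)"
      using uB by (auto simp: AB_def AB_form)
    obtain c where c: "c \<in> opL scB (M i)" "\<forall>x\<in>Xc M. lam scB M i d (Pj M i (ap rest x)) = lam scB M i c (Pj M i x)"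
      using claimF[OF rF d(1)] by blast
    have "ap (u # rest) x = lam scB M i c (Pj M i x)" if x: "x \<in> Xc M" for x
    proof -
      have y: "ap rest x \<in> Xc M" using ap_X[OF _ x, of rest] rF by auto
      show ?thesis using d(2) y c(2) x by simp
    qed
    then show ?thesis using c(1) by blast
  qed
qed

lemma Q_Xsub: assumes y: "y \<in> Xc M" shows "Pj M i y \<in> Xsub M i"
proof -
  have f: "rep (snd y) \<in> FV M" using Xc_rep[OF y] by simp
  have "Pj M i y = (fst y, cls M (rs i (rep (snd y))))" using Q_eq[OF f, of "fst y"] Xc_rep(2)[OF y] by metis
  then show ?thesis unfolding Xsub_def using FV_rs[OF f] by (auto simp: rs_def I1_def split: if_splits)
qed

lemma main: assumes "boolean_product (Xc M) (AF scB M i \<union> AB scB M i) (AB scB M i) A"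
  shows "A \<in> AB scB M i \<and> A ` Xc M \<subseteq> Xsub M i"
proof -
  obtain as where as: "as \<noteq> []" "set as \<subseteq> AF scB M i \<union> AB scB M i" "A = oprod (Xc M) as"
    "\<exists>a\<in>set as. a \<in> AB scB M i"
    using assms unfolding boolean_product_def by blast
  obtain c where c: "c \<in> opL scB (M i)" "\<forall>x\<in>Xc M. ap as x = lam scB M i c (Pj M i x)"
    using claimB[OF as(1,2) as(4)] by blast
  have A: "A = restrict (\<lambda>x. lam scB M i c (Pj M i x)) (Xc M)"
  proof (rule extensionalityI[OF _ restrict_extensional])
    show "A \<in> extensional (Xc M)" using as(3) oprod_ext by simp
    fix x assume "x \<in> Xc M" then show "A x = restrict (\<lambda>x. lam scB M i c (Pj M i x)) (Xc M) x"
      using as(3) oprod_ap[of x "Xc M" as] c(2) by simp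
  qed
  have "A \<in> AB scB M i" unfolding A AB_form[OF c(1), symmetric] AB_def using c(1) by blast
  moreover have "A ` Xc M \<subseteq> Xsub M i"
  proof
    fix y assume "y \<in> A ` Xc M"
    then obtain x where x: "x \<in> Xc M" "y = A x" by blast
    have "y = lam scB M i c (Pj M i x)" using A x by simp
    also have "\<dots> = Pj M i (lam scB M i c (Pj M i x))" using QL[OF c(1) Q_X[OF x(1)]] QQ[OF x(1)] by simp
    finally show "y \<in> Xsub M i" using Q_Xsub[OF L_X[OF c(1) Q_X[OF x(1)]]] by simp
  qed
  ultimately show ?thesis ..
qed

end

theorem proposition6p2:
  fixes scB :: "complex \<Rightarrow> 'b::ring_1 \<Rightarrow> 'b"
    and M :: "'i \<Rightarrow> ('b, 'm) bimod"
    and i :: 'i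
    and A :: "'b \<times> ('i, 'm) fvec set \<Rightarrow> 'b \<times> ('i, 'm) fvec set"
  assumes "calg scB"
    and "\<forall>j. bimodule scB (M j)"
    and "boolean_product (Xc M) (AF scB M i \<union> AB scB M i) (AB scB M i) A"
  shows "A \<in> AB scB M i \<and> A ` Xc M \<subseteq> Xsub M i"
proof -
  interpret fp scB M i using assms(1,2) by unfold_locales
  show ?thesis using main[OF assms(3)] .
qed

end
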